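(* Let $m>0$ and $C>\frac{2}{(4\pi)^2}$. There is a constant $D^a_C$ independent of $\varepsilon\in(0,1]$ such that for all $\varepsilon\in(0,1]$ and $(x,z)\in\mathbb{R}^2\times\mathbb{R}^2$, $$|\overline{\mathcal{G}}_\varepsilon(x,z)|\le C\log_+\Big(\frac1{\sqrt{|x|^2+|z|^2}\vee\varepsilon}\Big)+D^a_C,$$ where $\log_+(t)=\max(\log t,0)$ and $a\vee b=\max(a,b)$.
   Context: For $\varepsilon\in(0,1]$ and $(x,z)\in\mathbb{R}^2\times\mathbb{R}^2$, with $k=(k_1,k_2)$, $$\overline{\mathcal{G}}_\varepsilon(x,z)=\frac1{(2\pi)^4}\int_{\mathbb{R}^4}\frac{\sin^2(\varepsilon k_1/2)\sin^2(\varepsilon k_2/2)}{\varepsilon^4k_1^2k_2^2}\cdot\frac{e^{-i(x\cdot y+k\cdot z)}}{\big(|y|^2+4\varepsilon^{-2}\sin^2(\varepsilon k_1/2)+4\varepsilon^{-2}\sin^2(\varepsilon k_2/2)+m^2\big)^2}\,\mathrm{d}y\,\mathrm{d}k.$$ *)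

theory Defs
  imports "HOL-Analysis.Analysis"
begin

definition log_plus :: "real \<Rightarrow> real" where
  "log_plus t = max (ln t) 0"

definition Gbar_integrand ::
  "real \<Rightarrow> real \<Rightarrow> real \<times> real \<Rightarrow> real \<times> real \<Rightarrow> (real \<times> real) \<times> (real \<times> real) \<Rightarrow> complex" where
  "Gbar_integrand m \<epsilon> x z yk =
     (case yk of (y, k) \<Rightarrow>
       complex_of_real
         ((sin (\<epsilon> * fst k / 2))\<^sup>2 * (sin (\<epsilon> * snd k / 2))\<^sup>2
           / (\<epsilon> ^ 4 * (fst k)\<^sup>2 * (snd k)\<^sup>2))
       * cis (- (x \<bullet> y + k \<bullet> z))
       / complex_of_real
         (((norm y)\<^sup>2 + 4 / \<epsilon>\<^sup>2 * (sin (\<epsilon> * fst k / 2))\<^sup>2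
            + 4 / \<epsilon>\<^sup>2 * (sin (\<epsilon> * snd k / 2))\<^sup>2 + m\<^sup>2)\<^sup>2))"

definition Gbar :: "real \<Rightarrow> real \<Rightarrow> real \<times> real \<Rightarrow> real \<times> real \<Rightarrow> complex" where
  "Gbar m \<epsilon> x z =
     complex_of_real (1 / (2 * pi) ^ 4) * integral\<^sup>L lborel (Gbar_integrand m \<epsilon> x z)"

end

theory Submission
  imports Defs "HOL-Probability.Distributions" "HOL-Real_Asymp.Real_Asymp"
begin
lemma sigma_exp1: fixes s::real assumes "0 \<le> s" shows "s * exp (- s\<^sup>2) \<le> 1"
proof -
  have "1 + s\<^sup>2 \<le> exp (s\<^sup>2)" by (rule exp_ge_add_one_self)
  moreover have "0 \<le> (s - 1)\<^sup>2" by simp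
  hence "s \<le> 1 + s\<^sup>2" using assms by (simp add: power2_eq_square algebra_simps)
  ultimately have "s \<le> exp (s\<^sup>2)" by linarith
  then show ?thesis by (simp add: exp_minus field_simps)
qed

lemma sigma_exp3: fixes s::real assumes "0 \<le> s" shows "s^3 * exp (- s\<^sup>2) \<le> 1"
proof -
  have "1 + s\<^sup>2/2 \<le> exp (s\<^sup>2/2)" by (rule exp_ge_add_one_self)
  hence "(1 + s\<^sup>2/2)^2 \<le> (exp (s\<^sup>2/2))^2" by (intro power_mono) (auto intro: add_nonneg_nonneg)
  also have "(exp (s\<^sup>2/2))^2 = exp (s\<^sup>2)" by (simp add: exp_double[symmetric] power2_eq_square exp_add[symmetric])
  finally have e: "(1 + s\<^sup>2/2)^2 \<le> exp (s\<^sup>2)" .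
  have "s^3 \<le> (1 + s\<^sup>2/2)^2"
  proof -
    have "0 \<le> s\<^sup>2 * (1 - s/2)^2" by simp
    hence "s^3 \<le> s\<^sup>2 + s^4/4" by (simp add: power2_eq_square power3_eq_cube algebra_simps power4_eq_xxxx)
    also have "\<dots> \<le> (1 + s\<^sup>2/2)^2" by (simp add: power2_eq_square algebra_simps power4_eq_xxxx)
    finally show ?thesis .
  qed
  with e have "s^3 \<le> exp (s\<^sup>2)" by linarith
  then show ?thesis by (simp add: exp_minus field_simps)
qed

lemma fact4: "(fact 4 :: real) = 24" by (simp add: numeral_eq_Suc)

lemma sin_taylor: fixes w::real shows "\<bar>sin w - (w - w^3/6)\<bar> \<le> w^4/24"
proof -
  have "\<bar>sin w - (\<Sum>m<4. sin_coeff m * w ^ m)\<bar> \<le> inverse (fact 4) * \<bar>w\<bar> ^ 4"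
    by (rule Maclaurin_sin_bound)
  moreover have "(\<Sum>m<4. sin_coeff m * w ^ m) = w - w^3/6"
    by (simp add: numeral_eq_Suc sin_coeff_Suc cos_coeff_Suc field_simps power3_eq_cube)
  moreover have "inverse (fact 4) * \<bar>w\<bar> ^ 4 = w^4/(24::real)"
    unfolding fact4 by (simp add: power_abs[symmetric])
  ultimately show ?thesis by (simp only: fact4)
qed

lemma cos_taylor: fixes w::real shows "\<bar>cos w - (1 - w^2/2)\<bar> \<le> w^4/24"
proof -
  obtain t where t: "\<bar>t\<bar> \<le> \<bar>w\<bar>" "cos w = (\<Sum>m<4. cos_coeff m * w ^ m) + (cos(t + 1/2 * real 4 * pi) / fact 4) * w ^ 4"
    using Maclaurin_cos_expansion by blast
  have "(\<Sum>m<4. cos_coeff m * w ^ m) = 1 - w^2/2"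
    by (simp add: numeral_eq_Suc sin_coeff_Suc cos_coeff_Suc field_simps power2_eq_square)
  with t have "\<bar>cos w - (1 - w^2/2)\<bar> = \<bar>cos(t + 1/2 * real 4 * pi)\<bar> / 24 * w^4"
    by (simp add: fact4 abs_mult)
  also have "\<dots> \<le> 1/24 * w^4" by (intro mult_right_mono divide_right_mono) auto
  finally show ?thesis by simp
qed

lemma measurable_cis[measurable]: "cis \<in> borel_measurable borel"
  by (intro borel_measurable_continuous_onI continuous_on_cis continuous_on_id)

lemma cis_shift_pi: fixes \<zeta> :: real assumes "\<zeta> \<noteq> 0"
  shows "cis (- (pi / \<bar>\<zeta>\<bar> * \<zeta>)) = -1"
proof (cases "\<zeta> > 0")
  case True then show ?thesis by (simp add: cis.ctr complex_eq_iff)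
next
  case False then have "\<zeta> < 0" using assms by simp
  then have "pi / \<bar>\<zeta>\<bar> * \<zeta> = - pi" by (simp add: field_simps)
  then show ?thesis by (simp add: cis.ctr complex_eq_iff)
qed

lemma deriv_mvt_bound:
  fixes h B :: "real \<Rightarrow> real"
  assumes hd: "\<And>v. v \<noteq> 0 \<Longrightarrow> \<exists>d. (h has_real_derivative d) (at v) \<and> \<bar>d\<bar> \<le> B \<bar>v\<bar>"
   and Bmono: "\<And>s s'. 0 < s \<Longrightarrow> s \<le> s' \<Longrightarrow> B s' \<le> B s"
   and ab: "a < b" "0 \<notin> {a..b}"
  shows "\<bar>h b - h a\<bar> \<le> (b - a) * B (min \<bar>a\<bar> \<bar>b\<bar>)"
proof -
  have cont: "continuous_on {a..b} h"
  proof (intro continuous_at_imp_continuous_on ballI)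
    fix x assume "x \<in> {a..b}"
    then have "x \<noteq> 0" using ab by auto
    then obtain d where "(h has_real_derivative d) (at x)" using hd by blast
    then show "isCont h x" by (rule DERIV_isCont)
  qed
  have dif: "h differentiable (at x)" if "a < x" "x < b" for x
  proof -
    have "x \<noteq> 0" using ab that by auto
    then obtain d where "(h has_real_derivative d) (at x)" using hd by blast
    then show ?thesis using real_differentiable_def by blast
  qed
  obtain l z where z: "a < z" "z < b" "DERIV h z :> l" "h b - h a = (b - a) * l"
    using MVT[OF ab(1) cont dif] by blast
  have "z \<noteq> 0" using z ab by auto
  then obtain d where d: "(h has_real_derivative d) (at z)" "\<bar>d\<bar> \<le> B \<bar>z\<bar>" using hd by blast
  have "l = d" using DERIV_unique z(3) d(1) by blast
  have mz: "min \<bar>a\<bar> \<bar>b\<bar> \<le> \<bar>z\<bar>" "0 < min \<bar>a\<bar> \<bar>b\<bar>" using z ab by auto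
  have "\<bar>h b - h a\<bar> = (b - a) * \<bar>d\<bar>" using z \<open>l = d\<close> ab by (simp add: abs_mult)
  also have "\<dots> \<le> (b - a) * B (min \<bar>a\<bar> \<bar>b\<bar>)"
    using d(2) Bmono[OF mz(2) mz(1)] ab by (intro mult_left_mono) auto
  finally show ?thesis .
qed

lemma ft_decay:
  fixes h B :: "real \<Rightarrow> real" and H0 IB \<zeta> :: real
  assumes hm[measurable]: "h \<in> borel_measurable borel" and hi: "integrable lborel h"
   and hb: "\<And>k. \<bar>h k\<bar> \<le> H0"
   and hd: "\<And>v. v \<noteq> 0 \<Longrightarrow> \<exists>d. (h has_real_derivative d) (at v) \<and> \<bar>d\<bar> \<le> B \<bar>v\<bar>"
   and Bm[measurable]: "B \<in> borel_measurable borel"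
   and Bmono: "\<And>s s'. 0 < s \<Longrightarrow> s \<le> s' \<Longrightarrow> B s' \<le> B s"
   and IB: "(\<integral>\<^sup>+s. ennreal (B s) * indicator {0<..} s \<partial>lborel) \<le> ennreal IB"
   and \<zeta>: "\<zeta> \<noteq> 0" and IBnn: "0 \<le> IB"
  shows "norm (\<integral>k. complex_of_real (h k) * cis (- (k * \<zeta>)) \<partial>lborel) \<le> pi / (2 * \<bar>\<zeta>\<bar>) * (2 * H0 + 2 * IB)"
proof -
  define \<delta> where "\<delta> = pi / \<bar>\<zeta>\<bar>"
  have \<delta>pos: "\<delta> > 0" using \<zeta> by (simp add: \<delta>_def)
  have Bnn: "0 \<le> B s" if "s > 0" for s
  proof -
    have "s \<noteq> 0" using that by simp
    then obtain d where "\<bar>d\<bar> \<le> B \<bar>s\<bar>" using hd[of s] by blast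
    then show ?thesis using that by auto
  qed
  have H0nn: "0 \<le> H0" using hb[of 0] by auto
  define f where "f = (\<lambda>k. complex_of_real (h k) * cis (- (k * \<zeta>)))"
  have fm[measurable]: "f \<in> borel_measurable borel" unfolding f_def by measurable
  have fi: "integrable lborel f"
    by (rule Bochner_Integration.integrable_bound[OF hi]) (auto simp: f_def norm_mult)
  have hi2: "integrable lborel (\<lambda>k. h (\<delta> + 1 * k))"
    by (rule lborel_integrable_real_affine[OF hi]) simp
  define f2 where "f2 = (\<lambda>k. complex_of_real (h (\<delta> + 1 * k)) * cis (- (k * \<zeta>)))"
  have f2m[measurable]: "f2 \<in> borel_measurable borel" unfolding f2_def by measurable
  have f2i: "integrable lborel f2"
    by (rule Bochner_Integration.integrable_bound[OF hi2]) (auto simp: f2_def norm_mult)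
  have "(\<integral>k. f k \<partial>lborel) = \<bar>1\<bar> *\<^sub>R (\<integral>k. f (\<delta> + 1 * k) \<partial>lborel)"
    by (rule lborel_integral_real_affine) simp
  also have "\<dots> = (\<integral>k. - f2 k \<partial>lborel)"
  proof -
    have "f (\<delta> + 1 * k) = - f2 k" for k
    proof -
      have "cis (- ((\<delta> + 1 * k) * \<zeta>)) = cis (- (k * \<zeta>)) * cis (- (\<delta> * \<zeta>))"
        by (simp add: cis_mult algebra_simps)
      also have "cis (- (\<delta> * \<zeta>)) = -1" unfolding \<delta>_def by (rule cis_shift_pi[OF \<zeta>])
      finally show ?thesis by (simp add: f_def f2_def)
    qed
    then show ?thesis by simp
  qed
  also have "\<dots> = - (\<integral>k. f2 k \<partial>lborel)" by simp
  finally have I1: "(\<integral>k. f k \<partial>lborel) = - (\<integral>k. f2 k \<partial>lborel)" .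
  have "2 * (\<integral>k. f k \<partial>lborel) = (\<integral>k. f k \<partial>lborel) - (\<integral>k. f2 k \<partial>lborel)"
    using I1 by simp
  also have "\<dots> = (\<integral>k. f k - f2 k \<partial>lborel)"
    by (rule Bochner_Integration.integral_diff[symmetric, OF fi f2i])
  finally have I2: "2 * (\<integral>k. f k \<partial>lborel) = (\<integral>k. f k - f2 k \<partial>lborel)" .
  have "ennreal (norm (\<integral>k. f k - f2 k \<partial>lborel)) \<le> (\<integral>\<^sup>+k. norm (f k - f2 k) \<partial>lborel)"
    by (rule integral_norm_bound_ennreal) (intro Bochner_Integration.integrable_diff fi f2i)
  also have "\<dots> = (\<integral>\<^sup>+k. ennreal \<bar>h k - h (k + \<delta>)\<bar> \<partial>lborel)"
  proof (intro nn_integral_cong)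
    fix k
    have "f k - f2 k = complex_of_real (h k - h (k + \<delta>)) * cis (- (k * \<zeta>))"
      by (simp add: f_def f2_def algebra_simps)
    then show "ennreal (norm (f k - f2 k)) = ennreal \<bar>h k - h (k + \<delta>)\<bar>" by (simp only: norm_mult norm_cis norm_of_real) simp
  qed
  also have "\<dots> \<le> (\<integral>\<^sup>+k. ennreal \<delta> * (ennreal (B k) * indicator {0<..} k)
       + ennreal \<delta> * (ennreal (B (- \<delta> + (-1) * k)) * indicator {0<..} (- \<delta> + (-1) * k))
       + ennreal (2 * H0) * indicator {-\<delta>..0} k \<partial>lborel)"
  proof (intro nn_integral_mono)
    fix k
    consider "k > 0" | "k < - \<delta>" | "k \<in> {-\<delta>..0}" by force
    then show "ennreal \<bar>h k - h (k + \<delta>)\<bar> \<le> ennreal \<delta> * (ennreal (B k) * indicator {0<..} k)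
       + ennreal \<delta> * (ennreal (B (- \<delta> + (-1) * k)) * indicator {0<..} (- \<delta> + (-1) * k))
       + ennreal (2 * H0) * indicator {-\<delta>..0} k"
    proof cases
      case 1
      have "\<bar>h (k + \<delta>) - h k\<bar> \<le> (k + \<delta> - k) * B (min \<bar>k\<bar> \<bar>k + \<delta>\<bar>)"
        using 1 \<delta>pos by (intro deriv_mvt_bound[OF hd Bmono]) auto
      also have "min \<bar>k\<bar> \<bar>k + \<delta>\<bar> = k" using 1 \<delta>pos by auto
      finally have "\<bar>h k - h (k + \<delta>)\<bar> \<le> \<delta> * B k" by (simp add: abs_minus_commute)
      then have "ennreal \<bar>h k - h (k + \<delta>)\<bar> \<le> ennreal \<delta> * ennreal (B k)"
        using \<delta>pos Bnn[OF 1] by (simp add: ennreal_mult[symmetric])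
      then show ?thesis using 1 \<delta>pos by (simp add: indicator_def)
    next
      case 2
      have "\<bar>h (k + \<delta>) - h k\<bar> \<le> (k + \<delta> - k) * B (min \<bar>k\<bar> \<bar>k + \<delta>\<bar>)"
        using 2 \<delta>pos by (intro deriv_mvt_bound[OF hd Bmono]) auto
      also have "min \<bar>k\<bar> \<bar>k + \<delta>\<bar> = - \<delta> + (-1) * k" using 2 \<delta>pos by auto
      finally have "\<bar>h k - h (k + \<delta>)\<bar> \<le> \<delta> * B (- \<delta> + (-1) * k)" by (simp add: abs_minus_commute)
      moreover have "0 \<le> B (- \<delta> + (-1) * k)" using 2 by (intro Bnn) auto
      ultimately have "ennreal \<bar>h k - h (k + \<delta>)\<bar> \<le> ennreal \<delta> * ennreal (B (- \<delta> + (-1) * k))"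
        using \<delta>pos by (simp add: ennreal_mult[symmetric])
      then show ?thesis using 2 \<delta>pos by (simp add: indicator_def)
    next
      case 3
      have "\<bar>h k - h (k + \<delta>)\<bar> \<le> 2 * H0" using hb[of k] hb[of "k+\<delta>"] by linarith
      then have "ennreal \<bar>h k - h (k + \<delta>)\<bar> \<le> ennreal (2 * H0)" by simp
      then show ?thesis using 3 \<delta>pos by (simp add: indicator_def)
    qed
  qed
  also have "\<dots> = ennreal \<delta> * (\<integral>\<^sup>+k. ennreal (B k) * indicator {0<..} k \<partial>lborel)
      + ennreal \<delta> * (\<integral>\<^sup>+k. ennreal (B (- \<delta> + (-1) * k)) * indicator {0<..} (- \<delta> + (-1) * k) \<partial>lborel)
      + ennreal (2 * H0) * emeasure lborel {-\<delta>..0}"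
    by (simp add: nn_integral_add nn_integral_cmult)
  also have "(\<integral>\<^sup>+k. ennreal (B (- \<delta> + (-1) * k)) * indicator {0<..} (- \<delta> + (-1) * k) \<partial>lborel)
      = (\<integral>\<^sup>+k. ennreal (B k) * indicator {0<..} k \<partial>lborel)"
    using nn_integral_real_affine[of "\<lambda>k. ennreal (B k) * indicator {0<..} k" "-1" "-\<delta>"] by simp
  also have "emeasure lborel {-\<delta>..0} = ennreal \<delta>" using \<delta>pos by simp
  finally have "ennreal (norm (\<integral>k. f k - f2 k \<partial>lborel)) \<le>
      ennreal \<delta> * (\<integral>\<^sup>+k. ennreal (B k) * indicator {0<..} k \<partial>lborel)
      + ennreal \<delta> * (\<integral>\<^sup>+k. ennreal (B k) * indicator {0<..} k \<partial>lborel) + ennreal (2 * H0) * ennreal \<delta>" .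
  also have "\<dots> \<le> ennreal \<delta> * ennreal IB + ennreal \<delta> * ennreal IB + ennreal (2 * H0) * ennreal \<delta>"
    by (intro add_mono mult_left_mono IB order.refl) auto
  also have "\<dots> = ennreal (\<delta> * (2 * H0 + 2 * IB))"
    using \<delta>pos IBnn H0nn by (simp add: ennreal_mult[symmetric] ennreal_plus[symmetric] algebra_simps del: ennreal_plus)
  finally have "norm (\<integral>k. f k - f2 k \<partial>lborel) \<le> \<delta> * (2 * H0 + 2 * IB)"
    using \<delta>pos IBnn H0nn by (subst (asm) ennreal_le_iff) auto
  then have "norm (2 * (\<integral>k. f k \<partial>lborel)) \<le> \<delta> * (2 * H0 + 2 * IB)" using I2 by simp
  then have "norm (\<integral>k. f k \<partial>lborel) \<le> \<delta> * (2 * H0 + 2 * IB) / 2" by (simp add: norm_mult)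
  also have "\<delta> * (2 * H0 + 2 * IB) / 2 = pi / (2 * \<bar>\<zeta>\<bar>) * (2 * H0 + 2 * IB)" by (simp add: \<delta>_def)
  finally show ?thesis by (simp add: f_def)
qed

lemma gauss_integral:
  fixes a :: real assumes a: "0 < a"
  shows "integrable lborel (\<lambda>y. exp (- a * y\<^sup>2))" "(\<integral>y. exp (- a * y\<^sup>2) \<partial>lborel) = sqrt (pi / a)"
proof -
  define \<sigma> where "\<sigma> = 1 / sqrt (2 * a)"
  have \<sigma>: "0 < \<sigma>" using a by (simp add: \<sigma>_def)
  have eq: "exp (- a * y\<^sup>2) = sqrt (pi / a) * normal_density 0 \<sigma> y" for y
  proof -
    have s2: "\<sigma>\<^sup>2 = 1 / (2 * a)" using a by (simp add: \<sigma>_def power_divide)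
    have "sqrt (pi / a) * (1 / sqrt (2 * pi * \<sigma>\<^sup>2)) = 1"
      using a by (simp add: s2 real_sqrt_divide real_sqrt_mult field_simps)
    moreover have "- (y - 0)\<^sup>2 / (2 * \<sigma>\<^sup>2) = - a * y\<^sup>2" using a by (simp add: s2)
    ultimately show ?thesis unfolding normal_density_def by (metis mult.assoc mult_1)
  qed
  show "integrable lborel (\<lambda>y. exp (- a * y\<^sup>2))"
    unfolding eq using integrable_normal_density[OF \<sigma>] by simp
  show "(\<integral>y. exp (- a * y\<^sup>2) \<partial>lborel) = sqrt (pi / a)"
    unfolding eq using integral_normal_density[OF \<sigma>] by simp
qed

lemma gauss_nn:
  fixes a :: real assumes a: "0 < a"
  shows "(\<integral>\<^sup>+y. ennreal (exp (- a * y\<^sup>2)) \<partial>lborel) = ennreal (sqrt (pi / a))"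
  using gauss_integral[OF a] by (subst nn_integral_eq_integral) auto

lemma nn_integral_even:
  fixes F :: "real \<Rightarrow> ennreal" assumes [measurable]: "F \<in> borel_measurable borel"
  shows "(\<integral>\<^sup>+k. F \<bar>k\<bar> \<partial>lborel) = 2 * (\<integral>\<^sup>+s. F s * indicator {0<..} s \<partial>lborel)"
proof -
  have "(\<integral>\<^sup>+k. F \<bar>k\<bar> \<partial>lborel) = (\<integral>\<^sup>+k. F k * indicator {0<..} k + F (0 + (-1) * k) * indicator {0<..} (0 + (-1) * k) \<partial>lborel)"
  proof (intro nn_integral_cong_AE)
    have "AE k in lborel. k \<noteq> (0::real)" by (rule AE_lborel_singleton)
    then show "AE k in lborel. F \<bar>k\<bar> = F k * indicator {0<..} k + F (0 + (-1) * k) * indicator {0<..} (0 + (-1) * k)"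
      by eventually_elim (auto simp: indicator_def)
  qed
  also have "\<dots> = (\<integral>\<^sup>+k. F k * indicator {0<..} k \<partial>lborel) + (\<integral>\<^sup>+k. F (0 + (-1) * k) * indicator {0<..} (0 + (-1) * k) \<partial>lborel)"
    by (rule nn_integral_add) auto
  also have "(\<integral>\<^sup>+k. F (0 + (-1) * k) * indicator {0<..} (0 + (-1) * k) \<partial>lborel) = (\<integral>\<^sup>+k. F k * indicator {0<..} k \<partial>lborel)"
    using nn_integral_real_affine[of "\<lambda>k. F k * indicator {0<..} k" "-1" 0] by simp
  finally show ?thesis by (simp add: mult_2)
qed

lemma nn_integral_min_sq:
  fixes a b s0 :: real assumes "0 \<le> a" "0 \<le> b" "0 < s0"
  shows "(\<integral>\<^sup>+s. ennreal (min a (b / s\<^sup>2)) * indicator {0<..} s \<partial>lborel) \<le> ennreal (a * s0 + b / s0)"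
proof -
  have "(\<integral>\<^sup>+s. ennreal (min a (b / s\<^sup>2)) * indicator {0<..} s \<partial>lborel)
     \<le> (\<integral>\<^sup>+s. ennreal a * indicator {0<..s0} s + ennreal b * ennreal (indicator {s0..} s * s powr (-2)) \<partial>lborel)"
  proof (intro nn_integral_mono)
    fix s :: real
    consider "s \<le> 0" | "0 < s" "s \<le> s0" | "s0 < s" by linarith
    then show "ennreal (min a (b / s\<^sup>2)) * indicator {0<..} s \<le> ennreal a * indicator {0<..s0} s + ennreal b * ennreal (indicator {s0..} s * s powr (-2))"
    proof cases
      case 1 then show ?thesis by (simp add: indicator_def)
    next
      case 2
      have "ennreal (min a (b / s\<^sup>2)) \<le> ennreal a" by (intro ennreal_leI) simp
      also have "\<dots> \<le> ennreal a + ennreal b * ennreal (indicator {s0..} s * s powr (-2))"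
        by (rule add_increasing2) auto
      finally show ?thesis using 2 by (simp add: indicator_def)
    next
      case 3
      then have "s > 0" using assms by simp
      then have "s powr (-2) = 1 / s\<^sup>2" by (simp add: powr_minus powr_numeral divide_inverse)
      then have "ennreal (min a (b / s\<^sup>2)) \<le> ennreal b * ennreal (s powr (-2))"
        using assms \<open>s > 0\<close> by (simp add: ennreal_mult[symmetric])
      then show ?thesis using 3 \<open>s>0\<close> assms by (simp add: indicator_def)
    qed
  qed
  also have "\<dots> = ennreal a * emeasure lborel {0<..s0} + ennreal b * (\<integral>\<^sup>+s. ennreal (indicator {s0..} s * s powr (-2)) \<partial>lborel)"
    by (simp add: nn_integral_add nn_integral_cmult)
  also have "(\<integral>\<^sup>+s. ennreal (indicator {s0..} s * s powr (-2)) \<partial>lborel) = ennreal (- (s0 powr (-2 + 1)) / (-2 + 1))"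
    by (rule nn_integral_has_integral_lebesgue) (use assms has_integral_powr_to_inf[of "-2" s0] in auto)
  also have "- (s0 powr (-2 + 1)) / (-2 + 1) = 1 / s0" using assms by (simp add: powr_minus_divide)
  also have "emeasure lborel {0<..s0} = ennreal s0" using assms by simp
  finally show ?thesis using assms by (simp add: ennreal_mult[symmetric] ennreal_plus[symmetric] del: ennreal_plus)
qed

lemma wcos_sin: fixes w::real assumes "\<bar>w\<bar> \<le> 1" shows "\<bar>w * cos w - sin w\<bar> \<le> 5/12 * \<bar>w\<bar>^3"
proof -
  have e1: "\<bar>sin w - (w - w^3/6)\<bar> \<le> w^4/24" by (rule sin_taylor)
  have e2: "\<bar>cos w - (1 - w^2/2)\<bar> \<le> w^4/24" by (rule cos_taylor)
  define A where "A = w * (cos w - (1 - w^2/2))"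
  define B where "B = sin w - (w - w^3/6)"
  define C where "C = w^3/(3::real)"
  have eq: "w * cos w - sin w = A - B - C"
    by (simp add: A_def B_def C_def algebra_simps power2_eq_square power3_eq_cube)
  have "\<bar>A - B - C\<bar> \<le> \<bar>A\<bar> + \<bar>B\<bar> + \<bar>C\<bar>"
    using abs_triangle_ineq4[of A B] abs_triangle_ineq4[of "A - B" C] by linarith
  moreover have "\<bar>A\<bar> = \<bar>w\<bar> * \<bar>cos w - (1 - w^2/2)\<bar>" by (simp add: A_def abs_mult)
  moreover have "\<bar>C\<bar> = \<bar>w\<bar>^3/3" by (simp add: C_def power_abs)
  ultimately have "\<bar>w * cos w - sin w\<bar> \<le> \<bar>w\<bar> * \<bar>cos w - (1 - w^2/2)\<bar> + \<bar>sin w - (w - w^3/6)\<bar> + \<bar>w\<bar>^3/3"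
    unfolding eq by (simp add: B_def)
  also have "\<dots> \<le> \<bar>w\<bar> * (w^4/24) + w^4/24 + \<bar>w\<bar>^3/3"
    by (intro add_mono mult_left_mono e1 e2) auto
  also have "\<dots> \<le> \<bar>w\<bar>^3/24 + \<bar>w\<bar>^3/24 + \<bar>w\<bar>^3/3"
  proof -
    have w4: "w^4 = \<bar>w\<bar>^3 * \<bar>w\<bar>" by (simp add: power_abs[symmetric] abs_mult[symmetric] power4_eq_xxxx power3_eq_cube)
    have "\<bar>w\<bar>^3 * \<bar>w\<bar> \<le> \<bar>w\<bar>^3 * 1" by (intro mult_left_mono assms) auto
    then have a: "w^4 \<le> \<bar>w\<bar>^3" unfolding w4 by simp
    have "\<bar>w\<bar> * w^4 \<le> 1 * w^4" using assms by (intro mult_right_mono) auto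
    with a have b: "\<bar>w\<bar> * w^4 \<le> \<bar>w\<bar>^3" by simp
    have "\<bar>w\<bar> * (w^4/24) \<le> \<bar>w\<bar>^3/24" using b by simp
    with a show ?thesis by linarith
  qed
  finally show ?thesis by simp
qed

lemma sin_sq_lower: fixes w::real assumes "\<bar>w\<bar> \<le> 1" shows "w\<^sup>2 / 2 \<le> (sin w)\<^sup>2"
proof -
  have e1: "\<bar>sin w - (w - w^3/6)\<bar> \<le> w^4/24" by (rule sin_taylor)
  have "\<bar>w\<bar>^3 \<le> \<bar>w\<bar>"
  proof -
    have "\<bar>w\<bar>^3 = \<bar>w\<bar> * \<bar>w\<bar>^2" by (simp add: power3_eq_cube power2_eq_square)
    also have "\<dots> \<le> \<bar>w\<bar> * 1" using assms power_mono[of "\<bar>w\<bar>" 1 2] by (intro mult_left_mono) auto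
    finally show ?thesis by simp
  qed
  then have "\<bar>w^3/6\<bar> \<le> \<bar>w\<bar>/6" by (simp add: power_abs)
  moreover have "w^4/24 \<le> \<bar>w\<bar>/24"
  proof -
    have "w^4 = \<bar>w\<bar>^3 * \<bar>w\<bar>" by (simp add: power_abs[symmetric] abs_mult[symmetric] power4_eq_xxxx power3_eq_cube)
    also have "\<dots> \<le> 1 * \<bar>w\<bar>" using assms by (intro mult_right_mono) (auto simp: power_le_one)
    finally show ?thesis by simp
  qed
  ultimately have "\<bar>sin w\<bar> \<ge> \<bar>w\<bar> * (19/24)" using e1 by linarith
  then have "(\<bar>w\<bar> * (19/24))\<^sup>2 \<le> \<bar>sin w\<bar>\<^sup>2" by (intro power_mono) auto
  moreover have "(\<bar>w\<bar> * (19/24))\<^sup>2 = w\<^sup>2 * (361/576)" by (simp add: power2_eq_square)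
  ultimately have "w\<^sup>2 * (361/576) \<le> (sin w)\<^sup>2" by simp
  moreover have "0 \<le> w\<^sup>2" by simp
  ultimately show ?thesis by linarith
qed

lemma qprime_bound: fixes w::real assumes "w \<noteq> 0"
  shows "\<bar>sin w * (w * cos w - sin w) / (2 * w^3)\<bar> \<le> min 1 (1 / w\<^sup>2)"
proof (cases "\<bar>w\<bar> \<le> 1")
  case True
  have "\<bar>sin w * (w * cos w - sin w)\<bar> \<le> \<bar>w\<bar> * (5/12 * \<bar>w\<bar>^3)"
    unfolding abs_mult by (intro mult_mono wcos_sin True abs_sin_le_one) (auto simp: abs_sin_x_le_abs_x)
  moreover have "\<bar>sin w * (w * cos w - sin w) / (2 * w^3)\<bar> = \<bar>sin w * (w * cos w - sin w)\<bar> / (2 * \<bar>w\<bar>^3)"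
    by (simp add: abs_mult power_abs)
  ultimately have "\<bar>sin w * (w * cos w - sin w) / (2 * w^3)\<bar> \<le> \<bar>w\<bar> * (5/12 * \<bar>w\<bar>^3) / (2 * \<bar>w\<bar>^3)"
    by (metis divide_right_mono zero_le_power abs_ge_zero mult_nonneg_nonneg zero_le_numeral)
  also have "\<dots> = 5/24 * \<bar>w\<bar>" using assms by (simp add: field_simps)
  also have "\<dots> \<le> min 1 (1 / w\<^sup>2)"
  proof -
    have "5/24 * \<bar>w\<bar> \<le> 1" using True by simp
    moreover have "1 \<le> 1 / w\<^sup>2" using True assms power_mono[of "\<bar>w\<bar>" 1 2] by (simp add: field_simps)
    ultimately show ?thesis by simp
  qed
  finally show ?thesis .
next
  case False
  have "\<bar>w * cos w - sin w\<bar> \<le> \<bar>w\<bar> + 1"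
  proof -
    have "\<bar>w * cos w\<bar> \<le> \<bar>w\<bar> * 1" unfolding abs_mult by (intro mult_left_mono) auto
    then show ?thesis using abs_triangle_ineq4[of "w * cos w" "sin w"] abs_sin_le_one[of w] by linarith
  qed
  also have "\<dots> \<le> 2 * \<bar>w\<bar>" using False by simp
  finally have "\<bar>sin w * (w * cos w - sin w)\<bar> \<le> 1 * (2 * \<bar>w\<bar>)"
    unfolding abs_mult by (intro mult_mono) auto
  moreover have "\<bar>sin w * (w * cos w - sin w) / (2 * w^3)\<bar> = \<bar>sin w * (w * cos w - sin w)\<bar> / (2 * \<bar>w\<bar>^3)"
    by (simp add: abs_mult power_abs)
  ultimately have "\<bar>sin w * (w * cos w - sin w) / (2 * w^3)\<bar> \<le> (2 * \<bar>w\<bar>) / (2 * \<bar>w\<bar>^3)"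
    by (metis divide_right_mono zero_le_power abs_ge_zero mult_nonneg_nonneg zero_le_numeral mult_1)
  also have "\<dots> = 1 / w\<^sup>2" using assms by (simp add: field_simps power2_eq_square power3_eq_cube)
  also have "\<dots> \<le> min 1 (1 / w\<^sup>2)" using False power_mono[of 1 "\<bar>w\<bar>" 2] by (simp add: field_simps)
  finally show ?thesis .
qed

definition gk :: "real \<Rightarrow> real \<Rightarrow> real" where "gk \<epsilon> k = (sin (\<epsilon> * k / 2))\<^sup>2 / (\<epsilon>\<^sup>2 * k\<^sup>2)"
definition Wk :: "real \<Rightarrow> real \<Rightarrow> real" where "Wk \<epsilon> k = 4 / \<epsilon>\<^sup>2 * (sin (\<epsilon> * k / 2))\<^sup>2"
definition hk :: "real \<Rightarrow> real \<Rightarrow> real \<Rightarrow> real" where "hk \<epsilon> t k = gk \<epsilon> k * exp (- t * Wk \<epsilon> k)"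
definition hy :: "real \<Rightarrow> real \<Rightarrow> real" where "hy t y = exp (- t * y\<^sup>2)"

lemma gk_measurable[measurable]: "gk \<epsilon> \<in> borel_measurable borel" unfolding gk_def by measurable
lemma Wk_measurable[measurable]: "Wk \<epsilon> \<in> borel_measurable borel" unfolding Wk_def by measurable
lemma hk_measurable[measurable]: "hk \<epsilon> t \<in> borel_measurable borel" unfolding hk_def by measurable
lemma hy_measurable[measurable]: "hy t \<in> borel_measurable borel" unfolding hy_def by measurable

lemma two_ennreal: "0 \<le> x \<Longrightarrow> 2 * ennreal x = ennreal (2 * x)"
  by (simp add: ennreal_mult)

lemma gk_nonneg: "0 \<le> gk \<epsilon> k" by (simp add: gk_def)
lemma Wk_nonneg: "0 \<le> Wk \<epsilon> k" by (simp add: Wk_def)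

lemma gk_le: assumes "\<epsilon> > 0" shows "gk \<epsilon> k \<le> 1/4"
proof (cases "k = 0")
  case True then show ?thesis by (simp add: gk_def)
next
  case False
  have "(sin (\<epsilon> * k / 2))\<^sup>2 \<le> (\<epsilon> * k / 2)\<^sup>2"
    using abs_le_square_iff[THEN iffD1, OF abs_sin_x_le_abs_x[of "\<epsilon> * k / 2"]] .
  then show ?thesis using False assms by (simp add: gk_def field_simps power_mult_distrib)
qed

lemma gk_le2: assumes "\<epsilon> > 0" shows "gk \<epsilon> k \<le> (1 / \<epsilon>\<^sup>2) / k\<^sup>2"
proof (cases "k = 0")
  case True then show ?thesis by (simp add: gk_def)
next
  case False
  have "(sin (\<epsilon> * k / 2))\<^sup>2 \<le> 1" by (simp add: abs_square_le_1)
  then show ?thesis using False assms by (simp add: gk_def divide_right_mono)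
qed

lemma gk_Wk: "gk \<epsilon> k = Wk \<epsilon> k / (4 * k\<^sup>2)"
  by (cases "k = 0"; cases "\<epsilon> = 0") (simp_all add: gk_def Wk_def field_simps)

lemma Wk_lower: assumes "\<epsilon> > 0" "\<bar>\<epsilon> * k\<bar> \<le> 2" shows "k\<^sup>2 / 2 \<le> Wk \<epsilon> k"
proof -
  have "(\<epsilon> * k / 2)\<^sup>2 / 2 \<le> (sin (\<epsilon> * k / 2))\<^sup>2" using assms by (intro sin_sq_lower) simp
  then have "4 / \<epsilon>\<^sup>2 * ((\<epsilon> * k / 2)\<^sup>2 / 2) \<le> 4 / \<epsilon>\<^sup>2 * (sin (\<epsilon> * k / 2))\<^sup>2"
    by (intro mult_left_mono) auto
  then show ?thesis using assms by (simp add: Wk_def power_mult_distrib power_divide)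
qed

lemma hk_nonneg: "0 \<le> hk \<epsilon> t k" by (simp add: hk_def gk_nonneg)

lemma hk_le_gk: assumes "0 \<le> t" shows "hk \<epsilon> t k \<le> gk \<epsilon> k"
proof -
  have "exp (- t * Wk \<epsilon> k) \<le> 1" using assms Wk_nonneg[of \<epsilon> k] by simp
  then show ?thesis unfolding hk_def using gk_nonneg[of \<epsilon> k] by (simp add: mult_left_le)
qed

lemma hk_int1: assumes "\<epsilon> > 0" "0 \<le> t"
  shows "(\<integral>\<^sup>+k. ennreal (hk \<epsilon> t k) \<partial>lborel) \<le> ennreal (2 / \<epsilon>)"
proof -
  define F where "F = (\<lambda>s::real. ennreal (min (1/4) ((1 / \<epsilon>\<^sup>2) / s\<^sup>2)))"
  have [measurable]: "F \<in> borel_measurable borel" unfolding F_def by measurable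
  have "(\<integral>\<^sup>+k. ennreal (hk \<epsilon> t k) \<partial>lborel) \<le> (\<integral>\<^sup>+k. F \<bar>k\<bar> \<partial>lborel)"
  proof (intro nn_integral_mono)
    fix k
    have "hk \<epsilon> t k \<le> min (1/4) ((1 / \<epsilon>\<^sup>2) / k\<^sup>2)"
      using hk_le_gk[OF assms(2)] gk_le[OF assms(1)] gk_le2[OF assms(1)] by (meson min.bounded_iff order.trans)
    then show "ennreal (hk \<epsilon> t k) \<le> F \<bar>k\<bar>" by (simp add: F_def)
  qed
  also have "\<dots> = 2 * (\<integral>\<^sup>+s. F s * indicator {0<..} s \<partial>lborel)" by (rule nn_integral_even) measurable
  also have "\<dots> \<le> 2 * ennreal (1/4 * (2 / \<epsilon>) + (1 / \<epsilon>\<^sup>2) / (2 / \<epsilon>))"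
    unfolding F_def by (intro mult_left_mono nn_integral_min_sq) (use assms in auto)
  also have "\<dots> = ennreal (2 / \<epsilon>)"
    using assms by (subst two_ennreal) (auto simp: power2_eq_square field_simps)
  finally show ?thesis .
qed

lemma s_exp_le1: fixes s::real assumes "0 \<le> s" shows "s * exp (- s) \<le> 1"
proof -
  have "1 + s \<le> exp s" by (rule exp_ge_add_one_self)
  then have "s \<le> exp s" by linarith
  then show ?thesis by (simp add: exp_minus field_simps)
qed

lemma tail_int: fixes s0::real assumes "0 < s0"
  shows "(\<integral>\<^sup>+k. ennreal (indicator {s0..} \<bar>k\<bar> * \<bar>k\<bar> powr (-2)) \<partial>lborel) = ennreal (2 / s0)"
proof -
  have "(\<integral>\<^sup>+k. ennreal (indicator {s0..} \<bar>k\<bar> * \<bar>k\<bar> powr (-2)) \<partial>lborel)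
     = 2 * (\<integral>\<^sup>+s. ennreal (indicator {s0..} s * s powr (-2)) * indicator {0<..} s \<partial>lborel)"
    by (rule nn_integral_even[where F="\<lambda>s. ennreal (indicator {s0..} s * s powr (-2))"]) measurable
  also have "(\<integral>\<^sup>+s. ennreal (indicator {s0..} s * s powr (-2)) * indicator {0<..} s \<partial>lborel)
     = (\<integral>\<^sup>+s. ennreal (indicator {s0..} s * s powr (-2)) \<partial>lborel)"
    using assms by (intro nn_integral_cong) (auto simp: indicator_def)
  also have "\<dots> = ennreal (- (s0 powr (-2 + 1)) / (-2 + 1))"
    by (rule nn_integral_has_integral_lebesgue) (use assms has_integral_powr_to_inf[of "-2" s0] in auto)
  also have "- (s0 powr (-2 + 1)) / (-2 + 1) = 1 / s0" using assms by (simp add: powr_minus_divide)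
  finally show ?thesis using assms by (simp add: two_ennreal)
qed

lemma sqrt_2pi_le3: "sqrt (2 * pi) \<le> 3"
proof -
  have "2 * pi \<le> 3\<^sup>2" using pi_less_4 by simp
  then have "sqrt (2 * pi) \<le> sqrt (3\<^sup>2)" by (rule real_sqrt_le_mono)
  then show ?thesis by simp
qed

lemma hk_int2: assumes "\<epsilon> > 0" "\<epsilon>\<^sup>2 \<le> t"
  shows "(\<integral>\<^sup>+k. ennreal (hk \<epsilon> t k) \<partial>lborel) \<le> ennreal (1 / sqrt t)"
proof -
  have t: "0 < t" using assms by (smt (verit) zero_less_power)
  have "(\<integral>\<^sup>+k. ennreal (hk \<epsilon> t k) \<partial>lborel) \<le>
     (\<integral>\<^sup>+k. ennreal (1/4) * ennreal (exp (- (t/2) * k\<^sup>2)) + ennreal (1 / (4 * t)) * ennreal (indicator {2/\<epsilon>..} \<bar>k\<bar> * \<bar>k\<bar> powr (-2)) \<partial>lborel)"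
  proof (intro nn_integral_mono)
    fix k :: real
    show "ennreal (hk \<epsilon> t k) \<le> ennreal (1/4) * ennreal (exp (- (t/2) * k\<^sup>2)) + ennreal (1 / (4 * t)) * ennreal (indicator {2/\<epsilon>..} \<bar>k\<bar> * \<bar>k\<bar> powr (-2))"
    proof (cases "\<bar>\<epsilon> * k\<bar> \<le> 2")
      case True
      have "- t * Wk \<epsilon> k \<le> - (t/2) * k\<^sup>2" using Wk_lower[OF assms(1) True] t by simp
      then have "exp (- t * Wk \<epsilon> k) \<le> exp (- (t/2) * k\<^sup>2)" by simp
      then have "hk \<epsilon> t k \<le> 1/4 * exp (- (t/2) * k\<^sup>2)"
        unfolding hk_def using gk_le[OF assms(1)] gk_nonneg by (intro mult_mono) auto
      then have "ennreal (hk \<epsilon> t k) \<le> ennreal (1/4) * ennreal (exp (- (t/2) * k\<^sup>2))"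
        by (simp add: ennreal_mult[symmetric])
      then show ?thesis by (rule order.trans) simp
    next
      case False
      then have kk: "\<bar>k\<bar> \<ge> 2/\<epsilon>" "k \<noteq> 0" using assms by (auto simp: abs_mult field_simps)
      have "hk \<epsilon> t k = (t * Wk \<epsilon> k * exp (- (t * Wk \<epsilon> k))) / (4 * t * k\<^sup>2)"
        using t kk by (simp add: hk_def gk_Wk field_simps)
      also have "\<dots> \<le> 1 / (4 * t * k\<^sup>2)"
        using t kk s_exp_le1[of "t * Wk \<epsilon> k"] Wk_nonneg[of \<epsilon> k] by (intro divide_right_mono) auto
      also have "\<dots> = 1 / (4 * t) * (indicator {2/\<epsilon>..} \<bar>k\<bar> * \<bar>k\<bar> powr (-2))"
        using kk by (simp add: indicator_def powr_minus powr_numeral field_simps power2_abs)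
      finally have "ennreal (hk \<epsilon> t k) \<le> ennreal (1 / (4 * t)) * ennreal (indicator {2/\<epsilon>..} \<bar>k\<bar> * \<bar>k\<bar> powr (-2))"
        using t by (simp add: ennreal_mult[symmetric])
      then show ?thesis by (rule order.trans) simp
    qed
  qed
  also have "\<dots> = ennreal (1/4) * ennreal (sqrt (pi / (t/2))) + ennreal (1 / (4 * t)) * ennreal (2 / (2/\<epsilon>))"
  proof -
    have g: "(\<integral>\<^sup>+k. ennreal (exp (- (t * k\<^sup>2 / 2))) \<partial>lborel) = ennreal (sqrt (pi / (t/2)))"
      using gauss_nn[of "t/2"] t by simp
    show ?thesis using t assms by (simp add: nn_integral_add nn_integral_cmult g tail_int del: ennreal_numeral)
  qed
  also have "\<dots> = ennreal (1/4 * sqrt (pi / (t/2)) + 1 / (4 * t) * \<epsilon>)"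
    using t assms by (simp add: ennreal_mult[symmetric] ennreal_plus[symmetric] del: ennreal_plus ennreal_numeral)
  also have "\<dots> \<le> ennreal (1 / sqrt t)"
  proof (intro ennreal_leI)
    define u where "u = sqrt t"
    have u: "0 < u" "t = u\<^sup>2" using t by (auto simp: u_def)
    have eu: "\<epsilon> \<le> u" using assms u by (metis abs_of_pos power2_le_iff_abs_le u(1) less_imp_le)
    have "sqrt (pi / (t/2)) = sqrt (2 * pi) / u" using u by (simp add: real_sqrt_divide field_simps)
    moreover have "1 / (4 * t) * \<epsilon> \<le> 1 / (4 * u)" using u eu by (simp add: field_simps power2_eq_square)
    moreover have "(sqrt (2 * pi) + 1) / (4 * u) = sqrt (2 * pi) / (4 * u) + 1 / (4 * u)"
      by (simp add: add_divide_distrib)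
    moreover have "1/4 * (sqrt (2 * pi) / u) = sqrt (2 * pi) / (4 * u)" by simp
    ultimately have "1/4 * sqrt (pi / (t/2)) + 1 / (4 * t) * \<epsilon> \<le> (sqrt (2 * pi) + 1) / (4 * u)"
      by linarith
    also have "\<dots> \<le> 4 / (4 * u)" using sqrt_2pi_le3 u by (intro divide_right_mono) auto
    also have "4 / (4 * u) = 1 / sqrt t" using u(1) unfolding u_def by simp
    finally show "1/4 * sqrt (pi / (t/2)) + 1 / (4 * t) * \<epsilon> \<le> 1 / sqrt t" .
  qed
  finally show ?thesis .
qed

lemma min_sq_mono: fixes a b :: real assumes "0 \<le> b" "0 < s" "s \<le> s'"
  shows "min a (b / s'\<^sup>2) \<le> min a (b / s\<^sup>2)"
proof -
  have "s\<^sup>2 \<le> s'\<^sup>2" using assms by (intro power_mono) auto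
  then have "b / s'\<^sup>2 \<le> b / s\<^sup>2" using assms by (intro divide_left_mono) auto
  then show ?thesis by simp
qed

lemma hy_deriv_bound: assumes t: "0 < t" and v: "v \<noteq> 0"
  shows "\<exists>d. (hy t has_real_derivative d) (at v) \<and> \<bar>d\<bar> \<le> min (2 * sqrt t) ((2 / sqrt t) / \<bar>v\<bar>\<^sup>2)"
proof (intro exI conjI)
  show "(hy t has_real_derivative (exp (- t * v\<^sup>2) * (- t * (2 * v)))) (at v)"
    unfolding hy_def by (auto intro!: derivative_eq_intros simp: power2_eq_square)
  define u where "u = sqrt t"
  have u: "0 < u" "t = u\<^sup>2" using t by (auto simp: u_def)
  define \<sigma> where "\<sigma> = u * \<bar>v\<bar>"
  have \<sigma>: "0 \<le> \<sigma>" "\<sigma>\<^sup>2 = t * v\<^sup>2" using u by (auto simp: \<sigma>_def power_mult_distrib)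
  have eq: "\<bar>exp (- t * v\<^sup>2) * (- t * (2 * v))\<bar> = 2 * t * \<bar>v\<bar> * exp (- \<sigma>\<^sup>2)"
    using t by (simp add: \<sigma> abs_mult)
  have "2 * t * \<bar>v\<bar> * exp (- \<sigma>\<^sup>2) = 2 * u * (\<sigma> * exp (- \<sigma>\<^sup>2))"
    using u by (simp add: \<sigma>_def power2_eq_square)
  also have "\<dots> \<le> 2 * u * 1" using u sigma_exp1[OF \<sigma>(1)] by (intro mult_left_mono) auto
  finally have A: "2 * t * \<bar>v\<bar> * exp (- \<sigma>\<^sup>2) \<le> 2 * sqrt t" by (simp add: u_def)
  have "2 * t * \<bar>v\<bar> * exp (- \<sigma>\<^sup>2) = (2 / u) / \<bar>v\<bar>\<^sup>2 * (\<sigma>^3 * exp (- \<sigma>\<^sup>2))"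
    using u v by (simp add: \<sigma>_def field_simps power2_eq_square power3_eq_cube)
  also have "\<dots> \<le> (2 / u) / \<bar>v\<bar>\<^sup>2 * 1" using u sigma_exp3[OF \<sigma>(1)] by (intro mult_left_mono) auto
  finally have B: "2 * t * \<bar>v\<bar> * exp (- \<sigma>\<^sup>2) \<le> (2 / sqrt t) / \<bar>v\<bar>\<^sup>2" by (simp add: u_def)
  show "\<bar>exp (- t * v\<^sup>2) * (- t * (2 * v))\<bar> \<le> min (2 * sqrt t) ((2 / sqrt t) / \<bar>v\<bar>\<^sup>2)"
    using A B eq by simp
qed

lemma hy_integrable: "0 < t \<Longrightarrow> integrable lborel (hy t)"
  unfolding hy_def using gauss_integral(1) by simp

lemma hy_decay: assumes t: "0 < t" and \<xi>: "\<xi> \<noteq> 0"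
  shows "norm (\<integral>y. complex_of_real (hy t y) * cis (- (y * \<xi>)) \<partial>lborel) \<le> 5 * pi / \<bar>\<xi>\<bar>"
proof -
  have "norm (\<integral>y. complex_of_real (hy t y) * cis (- (y * \<xi>)) \<partial>lborel) \<le> pi / (2 * \<bar>\<xi>\<bar>) * (2 * 1 + 2 * 4)"
  proof (rule ft_decay[where B = "\<lambda>s. min (2 * sqrt t) ((2 / sqrt t) / s\<^sup>2)"])
    show "integrable lborel (hy t)" by (rule hy_integrable[OF t])
    show "\<bar>hy t k\<bar> \<le> 1" for k using t by (simp add: hy_def)
    show "\<exists>d. (hy t has_real_derivative d) (at v) \<and> \<bar>d\<bar> \<le> min (2 * sqrt t) ((2 / sqrt t) / \<bar>v\<bar>\<^sup>2)" if "v \<noteq> 0" for v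
      using hy_deriv_bound[OF t that] .
    show "min (2 * sqrt t) ((2 / sqrt t) / s'\<^sup>2) \<le> min (2 * sqrt t) ((2 / sqrt t) / s\<^sup>2)" if "0 < s" "s \<le> s'" for s s'
      using that t by (intro min_sq_mono) auto
    have "(\<integral>\<^sup>+s. ennreal (min (2 * sqrt t) ((2 / sqrt t) / s\<^sup>2)) * indicator {0<..} s \<partial>lborel) \<le> ennreal (2 * sqrt t * (1 / sqrt t) + (2 / sqrt t) / (1 / sqrt t))"
      using t by (intro nn_integral_min_sq) auto
    also have "2 * sqrt t * (1 / sqrt t) + (2 / sqrt t) / (1 / sqrt t) = 4" using t by simp
    finally show "(\<integral>\<^sup>+s. ennreal (min (2 * sqrt t) ((2 / sqrt t) / s\<^sup>2)) * indicator {0<..} s \<partial>lborel) \<le> ennreal 4" .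
  qed (use \<xi> in auto)
  also have "\<dots> = 5 * pi / \<bar>\<xi>\<bar>" by simp
  finally show ?thesis .
qed

lemma gk_deriv: assumes "\<epsilon> > 0" "v \<noteq> 0"
  shows "(gk \<epsilon> has_real_derivative
     (\<epsilon> * v * sin (\<epsilon> * v / 2) * cos (\<epsilon> * v / 2) - 2 * (sin (\<epsilon> * v / 2))\<^sup>2) / (\<epsilon>\<^sup>2 * v^3)) (at v)"
  unfolding gk_def[abs_def]
  using assms by (auto intro!: derivative_eq_intros simp: field_simps power2_eq_square power3_eq_cube)

lemma Wk_deriv: assumes "\<epsilon> > 0"
  shows "(Wk \<epsilon> has_real_derivative 4 / \<epsilon> * sin (\<epsilon> * v / 2) * cos (\<epsilon> * v / 2)) (at v)"
  unfolding Wk_def[abs_def]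
  using assms by (auto intro!: derivative_eq_intros simp: field_simps power2_eq_square)

lemma gd_bound: fixes \<epsilon> v :: real assumes "\<epsilon> > 0" "v \<noteq> 0"
  shows "\<bar>(\<epsilon> * v * sin (\<epsilon> * v / 2) * cos (\<epsilon> * v / 2) - 2 * (sin (\<epsilon> * v / 2))\<^sup>2) / (\<epsilon>\<^sup>2 * v^3)\<bar>
     \<le> min (\<epsilon> / 2) ((2 / \<epsilon>) / \<bar>v\<bar>\<^sup>2)"
proof -
  define w where "w = \<epsilon> * v / 2"
  have w0: "w \<noteq> 0" using assms by (simp add: w_def)
  have "(\<epsilon> * v * sin (\<epsilon> * v / 2) * cos (\<epsilon> * v / 2) - 2 * (sin (\<epsilon> * v / 2))\<^sup>2) / (\<epsilon>\<^sup>2 * v^3)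
      = \<epsilon> / 2 * (sin w * (w * cos w - sin w) / (2 * w^3))"
    using assms by (simp add: w_def field_simps power2_eq_square power3_eq_cube)
  then have "\<bar>(\<epsilon> * v * sin (\<epsilon> * v / 2) * cos (\<epsilon> * v / 2) - 2 * (sin (\<epsilon> * v / 2))\<^sup>2) / (\<epsilon>\<^sup>2 * v^3)\<bar>
      = \<epsilon> / 2 * \<bar>sin w * (w * cos w - sin w) / (2 * w^3)\<bar>" using assms by (simp add: abs_mult)
  also have "\<dots> \<le> \<epsilon> / 2 * min 1 (1 / w\<^sup>2)" using qprime_bound[OF w0] assms by (intro mult_left_mono) auto
  also have "\<dots> = min (\<epsilon> / 2) ((2 / \<epsilon>) / \<bar>v\<bar>\<^sup>2)"
  proof -
    have "\<epsilon> / 2 * (1 / w\<^sup>2) = (2 / \<epsilon>) / \<bar>v\<bar>\<^sup>2" using assms by (simp add: w_def field_simps power2_eq_square)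
    then show ?thesis using assms by (simp add: min_mult_distrib_left)
  qed
  finally show ?thesis .
qed

lemma Ed_bound: assumes e: "\<epsilon> > 0" and t: "t > 0" and v: "v \<noteq> 0"
  shows "gk \<epsilon> v * exp (- t * Wk \<epsilon> v) * t * \<bar>4 / \<epsilon> * sin (\<epsilon> * v / 2) * cos (\<epsilon> * v / 2)\<bar>
     \<le> min (sqrt t / 2) ((1 / (2 * sqrt t)) / \<bar>v\<bar>\<^sup>2)"
proof -
  define S where "S = \<bar>sin (\<epsilon> * v / 2)\<bar>"
  define u where "u = sqrt t"
  have u: "0 < u" "t = u\<^sup>2" using t by (auto simp: u_def)
  define \<sigma> where "\<sigma> = 2 * u * S / \<epsilon>"
  have S0: "0 \<le> S" by (simp add: S_def)
  have \<sigma>0: "0 \<le> \<sigma>" using u e S0 by (simp add: \<sigma>_def)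
  have tW: "t * Wk \<epsilon> v = \<sigma>\<^sup>2" using u e by (simp add: Wk_def \<sigma>_def S_def power_mult_distrib power_divide field_simps)
  have gkS: "gk \<epsilon> v = S\<^sup>2 / (\<epsilon>\<^sup>2 * v\<^sup>2)" by (simp add: gk_def S_def)
  have c: "\<bar>4 / \<epsilon> * sin (\<epsilon> * v / 2) * cos (\<epsilon> * v / 2)\<bar> \<le> 4 / \<epsilon> * S"
  proof -
    have "\<bar>4 / \<epsilon> * sin (\<epsilon> * v / 2) * cos (\<epsilon> * v / 2)\<bar> = 4 / \<epsilon> * S * \<bar>cos (\<epsilon> * v / 2)\<bar>"
      using e by (simp add: abs_mult S_def)
    also have "\<dots> \<le> 4 / \<epsilon> * S * 1" using e S0 by (intro mult_left_mono) auto
    finally show ?thesis by simp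
  qed
  define L where "L = gk \<epsilon> v * exp (- t * Wk \<epsilon> v) * t * \<bar>4 / \<epsilon> * sin (\<epsilon> * v / 2) * cos (\<epsilon> * v / 2)\<bar>"
  have Eeq: "exp (- t * Wk \<epsilon> v) = exp (- \<sigma>\<^sup>2)" using tW by (metis minus_mult_left)
  have "L = gk \<epsilon> v * exp (- \<sigma>\<^sup>2) * t * \<bar>4 / \<epsilon> * sin (\<epsilon> * v / 2) * cos (\<epsilon> * v / 2)\<bar>"
    unfolding L_def Eeq ..
  also have "\<dots> \<le> gk \<epsilon> v * exp (- \<sigma>\<^sup>2) * t * (4 / \<epsilon> * S)"
    by (intro mult_left_mono c) (use t gk_nonneg[of \<epsilon> v] in auto)
  finally have L1: "L \<le> gk \<epsilon> v * exp (- \<sigma>\<^sup>2) * t * (4 / \<epsilon> * S)" .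
  have A: "L \<le> sqrt t / 2"
  proof -
    have "gk \<epsilon> v * exp (- \<sigma>\<^sup>2) * t * (4 / \<epsilon> * S) \<le> 1/4 * exp (- \<sigma>\<^sup>2) * t * (4 / \<epsilon> * S)"
      using gk_le[OF e] t e S0 by (intro mult_right_mono) auto
    also have "\<dots> = u / 2 * (\<sigma> * exp (- \<sigma>\<^sup>2))" using u e by (simp add: \<sigma>_def field_simps power2_eq_square)
    also have "\<dots> \<le> u / 2 * 1" using u sigma_exp1[OF \<sigma>0] by (intro mult_left_mono) auto
    finally show ?thesis using L1 by (simp add: u_def)
  qed
  have B: "L \<le> (1 / (2 * sqrt t)) / \<bar>v\<bar>\<^sup>2"
  proof -
    have "gk \<epsilon> v * exp (- \<sigma>\<^sup>2) * t * (4 / \<epsilon> * S) = (1 / (2 * u)) / \<bar>v\<bar>\<^sup>2 * (\<sigma>^3 * exp (- \<sigma>\<^sup>2))"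
      using u e v by (simp add: gkS \<sigma>_def field_simps power2_eq_square power3_eq_cube)
    also have "\<dots> \<le> (1 / (2 * u)) / \<bar>v\<bar>\<^sup>2 * 1" using u sigma_exp3[OF \<sigma>0] by (intro mult_left_mono) auto
    finally show ?thesis using L1 by (simp add: u_def)
  qed
  show ?thesis using A B by (simp add: L_def)
qed

lemma hk_deriv_bound: assumes e: "\<epsilon> > 0" and t: "t > 0" and v: "v \<noteq> 0"
  shows "\<exists>d. (hk \<epsilon> t has_real_derivative d) (at v) \<and>
     \<bar>d\<bar> \<le> min (\<epsilon> / 2) ((2 / \<epsilon>) / \<bar>v\<bar>\<^sup>2) + min (sqrt t / 2) ((1 / (2 * sqrt t)) / \<bar>v\<bar>\<^sup>2)"
proof -
  define gd where "gd = (\<epsilon> * v * sin (\<epsilon> * v / 2) * cos (\<epsilon> * v / 2) - 2 * (sin (\<epsilon> * v / 2))\<^sup>2) / (\<epsilon>\<^sup>2 * v^3)"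
  define Wd where "Wd = 4 / \<epsilon> * sin (\<epsilon> * v / 2) * cos (\<epsilon> * v / 2)"
  define E where "E = exp (- t * Wk \<epsilon> v)"
  have E: "0 < E" "E \<le> 1" using t Wk_nonneg[of \<epsilon> v] by (auto simp: E_def)
  have D: "(hk \<epsilon> t has_real_derivative gd * E + gk \<epsilon> v * (E * (- t * Wd))) (at v)"
  proof -
    have "((\<lambda>k. gk \<epsilon> k * exp (- t * Wk \<epsilon> k)) has_real_derivative gd * exp (- t * Wk \<epsilon> v) + gk \<epsilon> v * (exp (- t * Wk \<epsilon> v) * (- t * Wd))) (at v)"
      using gk_deriv[OF e v] Wk_deriv[OF e, of v] unfolding gd_def Wd_def
      by (auto intro!: derivative_eq_intros)
    then show ?thesis by (simp add: hk_def[abs_def] E_def)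
  qed
  have "\<bar>gd * E + gk \<epsilon> v * (E * (- t * Wd))\<bar> \<le> \<bar>gd\<bar> * E + gk \<epsilon> v * E * t * \<bar>Wd\<bar>"
    using E t gk_nonneg[of \<epsilon> v] abs_triangle_ineq[of "gd * E" "gk \<epsilon> v * (E * (- t * Wd))"]
    by (simp add: abs_mult mult.assoc)
  also have "\<dots> \<le> \<bar>gd\<bar> * 1 + gk \<epsilon> v * E * t * \<bar>Wd\<bar>" using E t gk_nonneg[of \<epsilon> v] by (intro add_mono mult_left_mono) auto
  also have "\<dots> \<le> min (\<epsilon> / 2) ((2 / \<epsilon>) / \<bar>v\<bar>\<^sup>2) + min (sqrt t / 2) ((1 / (2 * sqrt t)) / \<bar>v\<bar>\<^sup>2)"
    using gd_bound[OF e v] Ed_bound[OF e t v] unfolding gd_def Wd_def E_def by (intro add_mono) auto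
  finally show ?thesis using D by blast
qed

lemma hk_integrable: assumes "\<epsilon> > 0" "0 \<le> t" shows "integrable lborel (hk \<epsilon> t)"
proof (rule integrableI_bounded)
  show "hk \<epsilon> t \<in> borel_measurable lborel" by simp
  have "(\<integral>\<^sup>+k. ennreal (norm (hk \<epsilon> t k)) \<partial>lborel) = (\<integral>\<^sup>+k. ennreal (hk \<epsilon> t k) \<partial>lborel)"
    by (simp add: hk_nonneg)
  also have "\<dots> \<le> ennreal (2 / \<epsilon>)" by (rule hk_int1[OF assms])
  also have "\<dots> < \<infinity>" by simp
  finally show "(\<integral>\<^sup>+k. ennreal (norm (hk \<epsilon> t k)) \<partial>lborel) < \<infinity>" .
qed

lemma hk_decay: assumes e: "\<epsilon> > 0" and t: "0 < t" and \<zeta>: "\<zeta> \<noteq> 0"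
  shows "norm (\<integral>k. complex_of_real (hk \<epsilon> t k) * cis (- (k * \<zeta>)) \<partial>lborel) \<le> 4 * pi / \<bar>\<zeta>\<bar>"
proof -
  define B where "B = (\<lambda>s. min (\<epsilon> / 2) ((2 / \<epsilon>) / s\<^sup>2) + min (sqrt t / 2) ((1 / (2 * sqrt t)) / s\<^sup>2))"
  have "norm (\<integral>k. complex_of_real (hk \<epsilon> t k) * cis (- (k * \<zeta>)) \<partial>lborel) \<le> pi / (2 * \<bar>\<zeta>\<bar>) * (2 * (1/4) + 2 * (7/2))"
  proof (rule ft_decay[where B = B])
    show "integrable lborel (hk \<epsilon> t)" by (rule hk_integrable) (use e t in auto)
    show "\<bar>hk \<epsilon> t k\<bar> \<le> 1/4" for k using hk_le_gk[of t \<epsilon> k] gk_le[OF e, of k] t hk_nonneg[of \<epsilon> t k] by simp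
    show "\<exists>d. (hk \<epsilon> t has_real_derivative d) (at v) \<and> \<bar>d\<bar> \<le> B \<bar>v\<bar>" if "v \<noteq> 0" for v
      unfolding B_def using hk_deriv_bound[OF e t that] by simp
    show "B s' \<le> B s" if "0 < s" "s \<le> s'" for s s'
      unfolding B_def using that t e by (intro add_mono min_sq_mono) auto
    show "B \<in> borel_measurable borel" unfolding B_def by measurable
    have "(\<integral>\<^sup>+s. ennreal (B s) * indicator {0<..} s \<partial>lborel) =
       (\<integral>\<^sup>+s. ennreal (min (\<epsilon> / 2) ((2 / \<epsilon>) / s\<^sup>2)) * indicator {0<..} s \<partial>lborel) +
       (\<integral>\<^sup>+s. ennreal (min (sqrt t / 2) ((1 / (2 * sqrt t)) / s\<^sup>2)) * indicator {0<..} s \<partial>lborel)"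
      unfolding B_def using e t
    proof (subst nn_integral_add[symmetric])
      show "(\<integral>\<^sup>+ s. ennreal (min (\<epsilon> / 2) (2 / \<epsilon> / s\<^sup>2) + min (sqrt t / 2) (1 / (2 * sqrt t) / s\<^sup>2)) * indicator {0<..} s \<partial>lborel) =
          (\<integral>\<^sup>+ s. ennreal (min (\<epsilon> / 2) (2 / \<epsilon> / s\<^sup>2)) * indicator {0<..} s + ennreal (min (sqrt t / 2) (1 / (2 * sqrt t) / s\<^sup>2)) * indicator {0<..} s \<partial>lborel)"
      proof (intro nn_integral_cong)
        fix s :: real
        have "0 \<le> min (\<epsilon> / 2) (2 / \<epsilon> / s\<^sup>2)" "0 \<le> min (sqrt t / 2) (1 / (2 * sqrt t) / s\<^sup>2)" using e t by auto
        then show "ennreal (min (\<epsilon> / 2) (2 / \<epsilon> / s\<^sup>2) + min (sqrt t / 2) (1 / (2 * sqrt t) / s\<^sup>2)) * indicator {0<..} s =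
          ennreal (min (\<epsilon> / 2) (2 / \<epsilon> / s\<^sup>2)) * indicator {0<..} s + ennreal (min (sqrt t / 2) (1 / (2 * sqrt t) / s\<^sup>2)) * indicator {0<..} s"
          by (simp add: ennreal_plus distrib_right del: min_less_iff_conj)
      qed
    qed auto
    also have "\<dots> \<le> ennreal (\<epsilon> / 2 * (1 / \<epsilon>) + (2 / \<epsilon>) / (1 / \<epsilon>)) + ennreal (sqrt t / 2 * (1 / sqrt t) + (1 / (2 * sqrt t)) / (1 / sqrt t))"
      using e t by (intro add_mono nn_integral_min_sq) auto
    also have "\<dots> = ennreal (5/2) + ennreal 1"
      using e t by simp
    also have "\<dots> = ennreal (7/2)" by (subst ennreal_plus[symmetric]) auto
    finally show "(\<integral>\<^sup>+s. ennreal (B s) * indicator {0<..} s \<partial>lborel) \<le> ennreal (7/2)" .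
  qed (use \<zeta> in auto)
  also have "\<dots> \<le> 4 * pi / \<bar>\<zeta>\<bar>" using \<zeta> by (simp add: field_simps)
  finally show ?thesis .
qed

lemma nn_prod:
  fixes u :: "'a::euclidean_space \<Rightarrow> ennreal" and v :: "'b::euclidean_space \<Rightarrow> ennreal"
  assumes [measurable]: "u \<in> borel_measurable borel" "v \<in> borel_measurable borel"
  shows "(\<integral>\<^sup>+pq. u (fst pq) * v (snd pq) \<partial>lborel) = (\<integral>\<^sup>+p. u p \<partial>lborel) * (\<integral>\<^sup>+q. v q \<partial>lborel)"
proof -
  have "(\<integral>\<^sup>+pq. u (fst pq) * v (snd pq) \<partial>lborel) = (\<integral>\<^sup>+pq. u (fst pq) * v (snd pq) \<partial>(lborel \<Otimes>\<^sub>M lborel))"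
    by (simp only: lborel_prod)
  also have "\<dots> = (\<integral>\<^sup>+p. \<integral>\<^sup>+q. u p * v q \<partial>lborel \<partial>lborel)"
    by (subst lborel.nn_integral_fst[symmetric]) auto
  also have "\<dots> = (\<integral>\<^sup>+p. u p * (\<integral>\<^sup>+q. v q \<partial>lborel) \<partial>lborel)"
    by (simp add: nn_integral_cmult)
  also have "\<dots> = (\<integral>\<^sup>+p. u p \<partial>lborel) * (\<integral>\<^sup>+q. v q \<partial>lborel)"
    by (simp add: nn_integral_multc)
  finally show ?thesis .
qed

lemma int_prod:
  fixes u :: "'a::euclidean_space \<Rightarrow> 'c::{real_normed_field, banach, second_countable_topology}"
    and v :: "'b::euclidean_space \<Rightarrow> 'c"
  assumes u: "integrable lborel u" and v: "integrable lborel v"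
  shows "integrable lborel (\<lambda>pq. u (fst pq) * v (snd pq))"
    "(\<integral>pq. u (fst pq) * v (snd pq) \<partial>lborel) = (\<integral>p. u p \<partial>lborel) * (\<integral>q. v q \<partial>lborel)"
proof -
  have [measurable]: "u \<in> borel_measurable borel" "v \<in> borel_measurable borel"
    using u v by (auto dest: borel_measurable_integrable)
  have "(\<integral>\<^sup>+pq. ennreal (norm (u (fst pq) * v (snd pq))) \<partial>lborel)
      = (\<integral>\<^sup>+pq. ennreal (norm (u (fst pq))) * ennreal (norm (v (snd pq))) \<partial>lborel)"
    by (simp add: norm_mult ennreal_mult)
  also have "\<dots> = (\<integral>\<^sup>+p. ennreal (norm (u p)) \<partial>lborel) * (\<integral>\<^sup>+q. ennreal (norm (v q)) \<partial>lborel)"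
    by (rule nn_prod) auto
  also have "\<dots> < \<infinity>" using u v by (simp add: integrable_iff_bounded ennreal_mult_less_top)
  moreover have "(\<lambda>pq. u (fst pq) * v (snd pq)) \<in> borel_measurable (borel \<Otimes>\<^sub>M borel)" by measurable
  then have "(\<lambda>pq. u (fst pq) * v (snd pq)) \<in> borel_measurable borel" by (simp only: borel_prod)
  ultimately show I: "integrable lborel (\<lambda>pq. u (fst pq) * v (snd pq))"
    by (intro integrableI_bounded) auto
  have I2: "integrable (lborel \<Otimes>\<^sub>M lborel) (\<lambda>pq. u (fst pq) * v (snd pq))"
    using I by (simp only: lborel_prod)
  have "(\<integral>pq. u (fst pq) * v (snd pq) \<partial>lborel) = (\<integral>pq. u (fst pq) * v (snd pq) \<partial>(lborel \<Otimes>\<^sub>M lborel))"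
    by (simp only: lborel_prod)
  also have "\<dots> = (\<integral>p. \<integral>q. u p * v q \<partial>lborel \<partial>lborel)"
    using lborel_pair.integral_fst'[OF I2] by simp
  also have "\<dots> = (\<integral>p. u p * (\<integral>q. v q \<partial>lborel) \<partial>lborel)" by simp
  also have "\<dots> = (\<integral>p. u p \<partial>lborel) * (\<integral>q. v q \<partial>lborel)" by simp
  finally show "(\<integral>pq. u (fst pq) * v (snd pq) \<partial>lborel) = (\<integral>p. u p \<partial>lborel) * (\<integral>q. v q \<partial>lborel)" .
qed

lemma schwinger: fixes A :: real assumes A: "0 < A"
  shows "has_bochner_integral lborel (\<lambda>t. indicator {0<..} t * (t * exp (- t * A))) (1 / A\<^sup>2)"
proof -
  have "(\<integral>\<^sup>+t. ennreal (t * exp (- t * A)) * indicator {0..} t \<partial>lborel) = 0 - (- (0 / A + 1 / A\<^sup>2) * exp (- 0 * A))"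
  proof (rule nn_integral_FTC_atLeast[where F = "\<lambda>t. - (t / A + 1 / A\<^sup>2) * exp (- t * A)"])
    show "(\<lambda>t. t * exp (- t * A)) \<in> borel_measurable borel" by measurable
    show "((\<lambda>t. - (t / A + 1 / A\<^sup>2) * exp (- t * A)) has_real_derivative t * exp (- t * A)) (at t)" for t
      using A by (auto intro!: derivative_eq_intros simp: field_simps power2_eq_square)
    show "0 \<le> t * exp (- t * A)" if "0 \<le> t" for t using that by simp
    show "((\<lambda>t. - (t / A + 1 / A\<^sup>2) * exp (- t * A)) \<longlongrightarrow> 0) at_top"
      using A by real_asymp
  qed
  also have "\<dots> = ennreal (1 / A\<^sup>2)" by simp
  finally have nn: "(\<integral>\<^sup>+t. ennreal (indicator {0<..} t * (t * exp (- t * A))) \<partial>lborel) = ennreal (1 / A\<^sup>2)"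
    by (subst nn_integral_cong[where v = "\<lambda>t. ennreal (t * exp (- t * A)) * indicator {0..} t"]) (auto simp: indicator_def)
  show ?thesis
    by (rule has_bochner_integral_nn_integral) (use nn in \<open>auto simp: indicator_def intro!: AE_I2\<close>)
qed

definition FTy :: "real \<Rightarrow> real \<Rightarrow> complex" where
  "FTy t \<xi> = (\<integral>y. complex_of_real (hy t y) * cis (- (y * \<xi>)) \<partial>lborel)"
definition FTk :: "real \<Rightarrow> real \<Rightarrow> real \<Rightarrow> complex" where
  "FTk \<epsilon> t \<zeta> = (\<integral>k. complex_of_real (hk \<epsilon> t k) * cis (- (k * \<zeta>)) \<partial>lborel)"

definition Hc :: "real \<Rightarrow> real \<Rightarrow> real \<times> real \<Rightarrow> real \<times> real \<Rightarrow> real \<Rightarrow> (real \<times> real) \<times> (real \<times> real) \<Rightarrow> complex" where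
  "Hc m \<epsilon> x z t yk = complex_of_real (indicator {0<..} t * t * exp (- t * m\<^sup>2)) *
   ((complex_of_real (hy t (fst (fst yk))) * cis (- (fst (fst yk) * fst x))) * (complex_of_real (hy t (snd (fst yk))) * cis (- (snd (fst yk) * snd x)))
   * ((complex_of_real (hk \<epsilon> t (fst (snd yk))) * cis (- (fst (snd yk) * fst z))) * (complex_of_real (hk \<epsilon> t (snd (snd yk))) * cis (- (snd (snd yk) * snd z)))))"

lemma Hc_eq:
  fixes y k x z :: "real \<times> real" and m \<epsilon> t :: real
  defines "A \<equiv> (norm y)\<^sup>2 + 4 / \<epsilon>\<^sup>2 * (sin (\<epsilon> * fst k / 2))\<^sup>2 + 4 / \<epsilon>\<^sup>2 * (sin (\<epsilon> * snd k / 2))\<^sup>2 + m\<^sup>2"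
  shows "Hc m \<epsilon> x z t (y, k) = (indicator {0<..} t * (t * exp (- t * A))) *\<^sub>R
     (complex_of_real (gk \<epsilon> (fst k) * gk \<epsilon> (snd k)) * cis (- (x \<bullet> y + k \<bullet> z)))"
proof -
  obtain y1 y2 k1 k2 where yk: "y = (y1, y2)" "k = (k1, k2)" by (cases y, cases k) auto
  obtain x1 x2 z1 z2 where xz: "x = (x1, x2)" "z = (z1, z2)" by (cases x, cases z) auto
  have A: "A = y1\<^sup>2 + y2\<^sup>2 + Wk \<epsilon> k1 + Wk \<epsilon> k2 + m\<^sup>2" by (simp add: A_def yk norm_Pair Wk_def)
  have e: "exp (- t * m\<^sup>2) * hy t y1 * hy t y2 * hk \<epsilon> t k1 * hk \<epsilon> t k2 = gk \<epsilon> k1 * gk \<epsilon> k2 * exp (- t * A)"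
    unfolding A hy_def hk_def by (simp add: exp_add[symmetric] mult_exp_exp algebra_simps)
  have c: "cis (- (y1 * x1)) * cis (- (y2 * x2)) * (cis (- (k1 * z1)) * cis (- (k2 * z2))) = cis (- (x \<bullet> y + k \<bullet> z))"
    by (simp add: xz yk cis_mult algebra_simps)
  have "Hc m \<epsilon> x z t (y, k) = complex_of_real (indicator {0<..} t * t * (exp (- t * m\<^sup>2) * hy t y1 * hy t y2 * hk \<epsilon> t k1 * hk \<epsilon> t k2))
      * (cis (- (y1 * x1)) * cis (- (y2 * x2)) * (cis (- (k1 * z1)) * cis (- (k2 * z2))))"
    by (simp add: Hc_def xz yk mult_ac)
  also have "\<dots> = (indicator {0<..} t * (t * exp (- t * A))) *\<^sub>R
     (complex_of_real (gk \<epsilon> (fst k) * gk \<epsilon> (snd k)) * cis (- (x \<bullet> y + k \<bullet> z)))"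
    unfolding e c by (simp add: yk scaleR_conv_of_real mult_ac)
  finally show ?thesis .
qed

lemma Hc_t_integral: assumes "m > 0"
  shows "has_bochner_integral lborel (\<lambda>t. Hc m \<epsilon> x z t yk) (Gbar_integrand m \<epsilon> x z yk)"
proof -
  obtain y k where yk: "yk = (y, k)" by (cases yk) auto
  define A where "A = (norm y)\<^sup>2 + 4 / \<epsilon>\<^sup>2 * (sin (\<epsilon> * fst k / 2))\<^sup>2 + 4 / \<epsilon>\<^sup>2 * (sin (\<epsilon> * snd k / 2))\<^sup>2 + m\<^sup>2"
  have A: "0 < A" using assms unfolding A_def by (intro add_nonneg_pos) auto
  define G where "G = complex_of_real (gk \<epsilon> (fst k) * gk \<epsilon> (snd k)) * cis (- (x \<bullet> y + k \<bullet> z))"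
  have "has_bochner_integral lborel (\<lambda>t. (indicator {0<..} t * (t * exp (- t * A))) *\<^sub>R G) ((1 / A\<^sup>2) *\<^sub>R G)"
    by (rule has_bochner_integral_scaleR_left[OF schwinger[OF A]])
  moreover have "(\<lambda>t. Hc m \<epsilon> x z t yk) = (\<lambda>t. (indicator {0<..} t * (t * exp (- t * A))) *\<^sub>R G)"
    unfolding yk A_def G_def by (rule ext) (rule Hc_eq)
  moreover have "Gbar_integrand m \<epsilon> x z yk = (1 / A\<^sup>2) *\<^sub>R G"
  proof -
    have g: "gk \<epsilon> (fst k) * gk \<epsilon> (snd k) = (sin (\<epsilon> * fst k / 2))\<^sup>2 * (sin (\<epsilon> * snd k / 2))\<^sup>2 / (\<epsilon> ^ 4 * (fst k)\<^sup>2 * (snd k)\<^sup>2)"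
      by (simp add: gk_def power2_eq_square power4_eq_xxxx mult_ac)
    show ?thesis
      unfolding Gbar_integrand_def yk G_def A_def g by (simp add: scaleR_conv_of_real field_simps)
  qed
  ultimately show ?thesis by simp
qed

lemma exp_int: fixes c :: real assumes c: "0 < c"
  shows "(\<integral>\<^sup>+t. ennreal (indicator {0<..} t * exp (- t * c)) \<partial>lborel) = ennreal (1 / c)"
proof -
  have "(\<integral>\<^sup>+t. ennreal (exp (- t * c)) * indicator {0..} t \<partial>lborel) = 0 - (- exp (- 0 * c) / c)"
  proof (rule nn_integral_FTC_atLeast[where F = "\<lambda>t. - exp (- t * c) / c"])
    show "(\<lambda>t. exp (- t * c)) \<in> borel_measurable borel" by measurable
    show "((\<lambda>t. - exp (- t * c) / c) has_real_derivative exp (- t * c)) (at t)" for t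
      using c by (auto intro!: derivative_eq_intros simp: field_simps)
    show "((\<lambda>t. - exp (- t * c) / c) \<longlongrightarrow> 0) at_top" using c by real_asymp
  qed auto
  also have "\<dots> = ennreal (1 / c)" by simp
  also have "(\<integral>\<^sup>+t. ennreal (exp (- t * c)) * indicator {0..} t \<partial>lborel) = (\<integral>\<^sup>+t. ennreal (indicator {0<..} t * exp (- t * c)) \<partial>lborel)"
  proof (intro nn_integral_cong_AE)
    have "AE t in lborel. t \<noteq> (0::real)" by (rule AE_lborel_singleton)
    then show "AE t in lborel. ennreal (exp (- t * c)) * indicator {0..} t = ennreal (indicator {0<..} t * exp (- t * c))"
      by eventually_elim (auto simp: indicator_def)
  qed
  finally show ?thesis .
qed

lemma ft_integrable: fixes h :: "real \<Rightarrow> real" assumes "integrable lborel h"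
  shows "integrable lborel (\<lambda>k. complex_of_real (h k) * cis (- (k * \<zeta>)))"
proof -
  have [measurable]: "h \<in> borel_measurable borel" using assms by (auto dest: borel_measurable_integrable)
  show ?thesis by (rule Bochner_Integration.integrable_bound[OF assms]) (auto simp: norm_mult)
qed

lemma Hc_yk:
  assumes e: "\<epsilon> > 0" and t: "t > 0"
  shows "integrable lborel (Hc m \<epsilon> x z t)"
    "(\<integral>yk. Hc m \<epsilon> x z t yk \<partial>lborel) = complex_of_real (indicator {0<..} t * t * exp (- t * m\<^sup>2)) *
        (FTy t (fst x) * FTy t (snd x) * (FTk \<epsilon> t (fst z) * FTk \<epsilon> t (snd z)))"
proof -
  define F1 where "F1 = (\<lambda>y. complex_of_real (hy t y) * cis (- (y * fst x)))"
  define F2 where "F2 = (\<lambda>y. complex_of_real (hy t y) * cis (- (y * snd x)))"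
  define F3 where "F3 = (\<lambda>k. complex_of_real (hk \<epsilon> t k) * cis (- (k * fst z)))"
  define F4 where "F4 = (\<lambda>k. complex_of_real (hk \<epsilon> t k) * cis (- (k * snd z)))"
  have i1: "integrable lborel F1" "integrable lborel F2" unfolding F1_def F2_def
    by (intro ft_integrable hy_integrable[OF t])+
  have i3: "integrable lborel F3" "integrable lborel F4" unfolding F3_def F4_def
    using e t by (intro ft_integrable hk_integrable; simp)+
  define U where "U = (\<lambda>p::real\<times>real. F1 (fst p) * F2 (snd p))"
  define V where "V = (\<lambda>p::real\<times>real. F3 (fst p) * F4 (snd p))"
  have iU: "integrable lborel U" "(\<integral>p. U p \<partial>lborel) = (\<integral>p. F1 p \<partial>lborel) * (\<integral>p. F2 p \<partial>lborel)"
    unfolding U_def using int_prod[OF i1] by auto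
  have iV: "integrable lborel V" "(\<integral>p. V p \<partial>lborel) = (\<integral>p. F3 p \<partial>lborel) * (\<integral>p. F4 p \<partial>lborel)"
    unfolding V_def using int_prod[OF i3] by auto
  have iUV: "integrable lborel (\<lambda>yk. U (fst yk) * V (snd yk))"
    "(\<integral>yk. U (fst yk) * V (snd yk) \<partial>lborel) = (\<integral>p. U p \<partial>lborel) * (\<integral>p. V p \<partial>lborel)"
    using int_prod[OF iU(1) iV(1)] by auto
  have eq: "Hc m \<epsilon> x z t = (\<lambda>yk. complex_of_real (indicator {0<..} t * t * exp (- t * m\<^sup>2)) * (U (fst yk) * V (snd yk)))"
    by (rule ext) (simp add: Hc_def U_def V_def F1_def F2_def F3_def F4_def)
  show "integrable lborel (Hc m \<epsilon> x z t)" unfolding eq using iUV(1) by simp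
  show "(\<integral>yk. Hc m \<epsilon> x z t yk \<partial>lborel) = complex_of_real (indicator {0<..} t * t * exp (- t * m\<^sup>2)) *
        (FTy t (fst x) * FTy t (snd x) * (FTk \<epsilon> t (fst z) * FTk \<epsilon> t (snd z)))"
    unfolding eq by (simp add: iUV(2) iU(2) iV(2) FTy_def FTk_def F1_def F2_def F3_def F4_def)
qed

lemma Hc_yk0: assumes "\<not> t > 0" shows "Hc m \<epsilon> x z t = (\<lambda>_. 0)"
  using assms by (auto simp: Hc_def indicator_def)

lemma sets_eq4: "sets (lborel \<Otimes>\<^sub>M (lborel :: ((real\<times>real)\<times>(real\<times>real)) measure)) =
   sets ((borel :: real measure) \<Otimes>\<^sub>M (((borel :: real measure) \<Otimes>\<^sub>M (borel :: real measure)) \<Otimes>\<^sub>M ((borel :: real measure) \<Otimes>\<^sub>M (borel :: real measure))))"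
  by (intro sets_pair_measure_cong) (simp_all only: borel_prod sets_lborel)

lemma Hc_measurable[measurable]:
  "(\<lambda>p. Hc m \<epsilon> x z (fst p) (snd p)) \<in> borel_measurable (lborel \<Otimes>\<^sub>M lborel)"
proof -
  have "(\<lambda>p. Hc m \<epsilon> x z (fst p) (snd p)) \<in> borel_measurable ((borel :: real measure) \<Otimes>\<^sub>M (((borel :: real measure) \<Otimes>\<^sub>M (borel :: real measure)) \<Otimes>\<^sub>M ((borel :: real measure) \<Otimes>\<^sub>M (borel :: real measure))))"
    unfolding Hc_def hy_def hk_def gk_def Wk_def by measurable
  then show ?thesis using measurable_cong_sets[OF sets_eq4 refl] by blast
qed

lemma Hc_norm_int:
  assumes e: "\<epsilon> > 0" and t: "t > 0"
  shows "(\<integral>\<^sup>+yk. ennreal (norm (Hc m \<epsilon> x z t yk)) \<partial>lborel) \<le> ennreal (exp (- t * m\<^sup>2) * (4 * pi / \<epsilon>\<^sup>2))"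
proof -
  define c where "c = t * exp (- t * m\<^sup>2)"
  have c: "0 \<le> c" using t by (simp add: c_def)
  define u where "u = (\<lambda>p::real\<times>real. ennreal (hy t (fst p)) * ennreal (hy t (snd p)))"
  define v where "v = (\<lambda>p::real\<times>real. ennreal (hk \<epsilon> t (fst p)) * ennreal (hk \<epsilon> t (snd p)))"
  have [measurable]: "u \<in> borel_measurable borel" "v \<in> borel_measurable borel"
  proof -
    have "u \<in> borel_measurable (borel \<Otimes>\<^sub>M borel)" unfolding u_def by measurable
    then show "u \<in> borel_measurable borel" by (simp only: borel_prod)
    have "v \<in> borel_measurable (borel \<Otimes>\<^sub>M borel)" unfolding v_def by measurable
    then show "v \<in> borel_measurable borel" by (simp only: borel_prod)
  qed
  have "(\<integral>\<^sup>+yk. ennreal (norm (Hc m \<epsilon> x z t yk)) \<partial>lborel) = (\<integral>\<^sup>+yk. ennreal c * (u (fst yk) * v (snd yk)) \<partial>lborel)"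
  proof (intro nn_integral_cong)
    fix yk :: "(real \<times> real) \<times> (real \<times> real)"
    have "norm (Hc m \<epsilon> x z t yk) = c * ((hy t (fst (fst yk)) * hy t (snd (fst yk))) * (hk \<epsilon> t (fst (snd yk)) * hk \<epsilon> t (snd (snd yk))))"
      using t by (simp add: Hc_def c_def norm_mult hk_nonneg hy_def abs_mult)
    then show "ennreal (norm (Hc m \<epsilon> x z t yk)) = ennreal c * (u (fst yk) * v (snd yk))"
      using c by (simp add: u_def v_def ennreal_mult hk_nonneg hy_def mult_nonneg_nonneg)
  qed
  also have "\<dots> = ennreal c * ((\<integral>\<^sup>+p. u p \<partial>lborel) * (\<integral>\<^sup>+q. v q \<partial>lborel))"
  proof -
    have "(\<lambda>yk. u (fst yk) * v (snd yk)) \<in> borel_measurable (borel \<Otimes>\<^sub>M borel)" by measurable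
    then have uv: "(\<lambda>yk. u (fst yk) * v (snd yk)) \<in> borel_measurable borel" by (simp only: borel_prod)
    show ?thesis by (subst nn_integral_cmult) (auto simp: uv nn_prod)
  qed
  also have "(\<integral>\<^sup>+p. u p \<partial>lborel) = (\<integral>\<^sup>+y. ennreal (hy t y) \<partial>lborel) * (\<integral>\<^sup>+y. ennreal (hy t y) \<partial>lborel)"
    unfolding u_def by (rule nn_prod) auto
  also have "(\<integral>\<^sup>+q. v q \<partial>lborel) = (\<integral>\<^sup>+y. ennreal (hk \<epsilon> t y) \<partial>lborel) * (\<integral>\<^sup>+y. ennreal (hk \<epsilon> t y) \<partial>lborel)"
    unfolding v_def by (rule nn_prod) auto
  also have "(\<integral>\<^sup>+y. ennreal (hy t y) \<partial>lborel) = ennreal (sqrt (pi / t))"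
    unfolding hy_def by (rule gauss_nn[OF t])
  also have "ennreal c * (ennreal (sqrt (pi / t)) * ennreal (sqrt (pi / t)) * ((\<integral>\<^sup>+y. ennreal (hk \<epsilon> t y) \<partial>lborel) * (\<integral>\<^sup>+y. ennreal (hk \<epsilon> t y) \<partial>lborel)))
     \<le> ennreal c * (ennreal (sqrt (pi / t)) * ennreal (sqrt (pi / t)) * (ennreal (2 / \<epsilon>) * ennreal (2 / \<epsilon>)))"
    using hk_int1[OF e, of t] t by (intro mult_left_mono mult_mono) auto
  also have "\<dots> = ennreal (exp (- t * m\<^sup>2) * (4 * pi / \<epsilon>\<^sup>2))"
  proof -
    have "c * (sqrt (pi / t) * sqrt (pi / t) * (2 / \<epsilon> * (2 / \<epsilon>))) = exp (- t * m\<^sup>2) * (4 * pi / \<epsilon>\<^sup>2)"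
      using t e by (simp add: c_def power2_eq_square field_simps)
    then show ?thesis using c t e by (simp add: ennreal_mult[symmetric] del: ennreal_numeral)
  qed
  finally show ?thesis .
qed

lemma Hc_integrable:
  assumes e: "\<epsilon> > 0" and m: "m > 0"
  shows "integrable (lborel \<Otimes>\<^sub>M lborel) (\<lambda>p. Hc m \<epsilon> x z (fst p) (snd p))"
proof (rule integrableI_bounded)
  show "(\<lambda>p. Hc m \<epsilon> x z (fst p) (snd p)) \<in> borel_measurable (lborel \<Otimes>\<^sub>M lborel)" by simp
  have "(\<integral>\<^sup>+p. ennreal (norm (Hc m \<epsilon> x z (fst p) (snd p))) \<partial>(lborel \<Otimes>\<^sub>M lborel))
      = (\<integral>\<^sup>+t. \<integral>\<^sup>+yk. ennreal (norm (Hc m \<epsilon> x z t yk)) \<partial>lborel \<partial>lborel)"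
    by (subst lborel.nn_integral_fst[symmetric]) auto
  also have "\<dots> \<le> (\<integral>\<^sup>+t. ennreal (4 * pi / \<epsilon>\<^sup>2) * ennreal (indicator {0<..} t * exp (- t * m\<^sup>2)) \<partial>lborel)"
  proof (intro nn_integral_mono)
    fix t :: real
    show "(\<integral>\<^sup>+yk. ennreal (norm (Hc m \<epsilon> x z t yk)) \<partial>lborel) \<le> ennreal (4 * pi / \<epsilon>\<^sup>2) * ennreal (indicator {0<..} t * exp (- t * m\<^sup>2))"
    proof (cases "t > 0")
      case True
      then show ?thesis using Hc_norm_int[OF e True, of m x z]
        by (simp add: ennreal_mult[symmetric] mult_ac)
    next
      case False then show ?thesis by (simp add: Hc_yk0)
    qed
  qed
  also have "\<dots> = ennreal (4 * pi / \<epsilon>\<^sup>2) * ennreal (1 / m\<^sup>2)"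
    using m exp_int[of "m\<^sup>2"] by (simp add: nn_integral_cmult)
  also have "\<dots> < \<infinity>" by (simp add: ennreal_mult_less_top)
  finally show "(\<integral>\<^sup>+p. ennreal (norm (Hc m \<epsilon> x z (fst p) (snd p))) \<partial>(lborel \<Otimes>\<^sub>M lborel)) < \<infinity>" .
qed

lemma main_L1:
  assumes e: "\<epsilon> > 0" and m: "m > 0"
  shows "ennreal (norm (integral\<^sup>L lborel (Gbar_integrand m \<epsilon> x z))) \<le>
    (\<integral>\<^sup>+t. ennreal (indicator {0<..} t * t * exp (- t * m\<^sup>2) * (norm (FTy t (fst x)) * norm (FTy t (snd x)) * (norm (FTk \<epsilon> t (fst z)) * norm (FTk \<epsilon> t (snd z))))) \<partial>lborel)"
proof -
  have I: "integrable (lborel \<Otimes>\<^sub>M lborel) (case_prod (\<lambda>t yk. Hc m \<epsilon> x z t yk))"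
    using Hc_integrable[OF e m, of x z] by (simp add: case_prod_beta')
  have "integral\<^sup>L lborel (Gbar_integrand m \<epsilon> x z) = (\<integral>yk. \<integral>t. Hc m \<epsilon> x z t yk \<partial>lborel \<partial>lborel)"
    by (intro Bochner_Integration.integral_cong refl) (simp add: has_bochner_integral_integral_eq[OF Hc_t_integral[OF m]])
  also have "\<dots> = (\<integral>t. \<integral>yk. Hc m \<epsilon> x z t yk \<partial>lborel \<partial>lborel)"
    by (rule lborel_pair.Fubini_integral[OF I])
  finally have eq: "integral\<^sup>L lborel (Gbar_integrand m \<epsilon> x z) = (\<integral>t. \<integral>yk. Hc m \<epsilon> x z t yk \<partial>lborel \<partial>lborel)" .
  have "ennreal (norm (\<integral>t. \<integral>yk. Hc m \<epsilon> x z t yk \<partial>lborel \<partial>lborel)) \<le> (\<integral>\<^sup>+t. norm (\<integral>yk. Hc m \<epsilon> x z t yk \<partial>lborel) \<partial>lborel)"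
    by (rule integral_norm_bound_ennreal) (rule lborel_pair.integrable_fst[OF I])
  also have "\<dots> = (\<integral>\<^sup>+t. ennreal (indicator {0<..} t * t * exp (- t * m\<^sup>2) * (norm (FTy t (fst x)) * norm (FTy t (snd x)) * (norm (FTk \<epsilon> t (fst z)) * norm (FTk \<epsilon> t (snd z))))) \<partial>lborel)"
  proof (intro nn_integral_cong)
    fix t :: real
    show "ennreal (norm (\<integral>yk. Hc m \<epsilon> x z t yk \<partial>lborel)) = ennreal (indicator {0<..} t * t * exp (- t * m\<^sup>2) * (norm (FTy t (fst x)) * norm (FTy t (snd x)) * (norm (FTk \<epsilon> t (fst z)) * norm (FTk \<epsilon> t (snd z)))))"
    proof (cases "t > 0")
      case True
      then show ?thesis using Hc_yk(2)[OF e True, of m x z] by (simp add: norm_mult)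
    next
      case False then show ?thesis by (simp add: Hc_yk0)
    qed
  qed
  finally show ?thesis unfolding eq .
qed

lemma FTy_le: assumes t: "0 < t" shows "norm (FTy t \<xi>) \<le> sqrt (pi / t)"
proof -
  have "norm (FTy t \<xi>) \<le> (\<integral>y. norm (complex_of_real (hy t y) * cis (- (y * \<xi>))) \<partial>lborel)"
    unfolding FTy_def by (rule integral_norm_bound)
  also have "\<dots> = (\<integral>y. exp (- t * y\<^sup>2) \<partial>lborel)" by (simp add: norm_mult hy_def)
  also have "\<dots> = sqrt (pi / t)" by (rule gauss_integral(2)[OF t])
  finally show ?thesis .
qed

lemma FTk_le_nn: assumes e: "0 < \<epsilon>" and t: "0 < t"
  shows "ennreal (norm (FTk \<epsilon> t \<zeta>)) \<le> (\<integral>\<^sup>+k. ennreal (hk \<epsilon> t k) \<partial>lborel)"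
proof -
  have "ennreal (norm (FTk \<epsilon> t \<zeta>)) \<le> (\<integral>\<^sup>+k. norm (complex_of_real (hk \<epsilon> t k) * cis (- (k * \<zeta>))) \<partial>lborel)"
    unfolding FTk_def by (rule integral_norm_bound_ennreal) (intro ft_integrable hk_integrable, use e t in auto)
  also have "\<dots> = (\<integral>\<^sup>+k. ennreal (hk \<epsilon> t k) \<partial>lborel)" by (simp add: norm_mult hk_nonneg)
  finally show ?thesis .
qed

lemma FTk_le1: assumes e: "0 < \<epsilon>" and t: "0 < t" shows "norm (FTk \<epsilon> t \<zeta>) \<le> 2 / \<epsilon>"
  using order.trans[OF FTk_le_nn[OF e t] hk_int1[OF e]] t e by (simp add: ennreal_le_iff)

lemma FTk_le2: assumes e: "0 < \<epsilon>" and t: "\<epsilon>\<^sup>2 \<le> t" shows "norm (FTk \<epsilon> t \<zeta>) \<le> 1 / sqrt t"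
proof -
  have "0 < t" using e t by (smt (verit, best) zero_less_power)
  then show ?thesis
    using order.trans[OF FTk_le_nn[OF e] hk_int2[OF e t]] t e by (simp add: ennreal_le_iff)
qed

lemma FTk_le3: assumes e: "0 < \<epsilon>" and t: "0 < t" shows "norm (FTk \<epsilon> t \<zeta>) \<le> 2 / sqrt t"
proof (cases "\<epsilon>\<^sup>2 \<le> t")
  case True
  then have "norm (FTk \<epsilon> t \<zeta>) \<le> 1 / sqrt t" by (rule FTk_le2[OF e])
  also have "\<dots> \<le> 2 / sqrt t" using t by (simp add: divide_right_mono)
  finally show ?thesis .
next
  case False
  then have "sqrt t < sqrt (\<epsilon>\<^sup>2)" by (intro real_sqrt_less_mono) simp
  then have "sqrt t < \<epsilon>" using e by simp
  then have "2 / \<epsilon> \<le> 2 / sqrt t" using t e by (intro divide_left_mono) auto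
  then show ?thesis using FTk_le1[OF e t, of \<zeta>] by linarith
qed

lemma FTy_decay: "0 < t \<Longrightarrow> \<xi> \<noteq> 0 \<Longrightarrow> norm (FTy t \<xi>) \<le> 5 * pi / \<bar>\<xi>\<bar>"
  unfolding FTy_def by (rule hy_decay)

lemma FTk_decay: "0 < \<epsilon> \<Longrightarrow> 0 < t \<Longrightarrow> \<zeta> \<noteq> 0 \<Longrightarrow> norm (FTk \<epsilon> t \<zeta>) \<le> 4 * pi / \<bar>\<zeta>\<bar>"
  unfolding FTk_def by (rule hk_decay)

lemma prod4_mono: fixes a1 a2 b1 b2 :: real
  assumes "0 \<le> a1" "0 \<le> a2" "0 \<le> b1" "0 \<le> b2" "a1 \<le> A1" "a2 \<le> A2" "b1 \<le> B1" "b2 \<le> B2"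
  shows "a1 * a2 * (b1 * b2) \<le> A1 * A2 * (B1 * B2)"
proof -
  have "a1 * a2 \<le> A1 * A2" using assms by (intro mult_mono) auto
  moreover have "b1 * b2 \<le> B1 * B2" using assms by (intro mult_mono) auto
  ultimately show ?thesis using assms by (intro mult_mono) auto
qed

lemma big_coord: fixes x1 x2 z1 z2 r :: real
  assumes "r = sqrt (x1\<^sup>2 + x2\<^sup>2 + z1\<^sup>2 + z2\<^sup>2)"
  shows "r / 2 \<le> \<bar>x1\<bar> \<or> r / 2 \<le> \<bar>x2\<bar> \<or> r / 2 \<le> \<bar>z1\<bar> \<or> r / 2 \<le> \<bar>z2\<bar>"
proof (rule ccontr)
  assume "\<not> ?thesis"
  then have h: "\<bar>x1\<bar> < r/2" "\<bar>x2\<bar> < r/2" "\<bar>z1\<bar> < r/2" "\<bar>z2\<bar> < r/2" by auto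
  have sq: "c\<^sup>2 < (r/2)\<^sup>2" if "\<bar>c\<bar> < r/2" for c :: real
  proof -
    have "\<bar>c\<bar>\<^sup>2 < (r/2)\<^sup>2" using that by (intro power_strict_mono) auto
    then show ?thesis by simp
  qed
  have "r\<^sup>2 = x1\<^sup>2 + x2\<^sup>2 + z1\<^sup>2 + z2\<^sup>2" using assms by simp
  also have "\<dots> < 4 * (r/2)\<^sup>2" using sq[OF h(1)] sq[OF h(2)] sq[OF h(3)] sq[OF h(4)] by linarith
  also have "\<dots> = r\<^sup>2" by (simp add: power2_eq_square)
  finally show False by simp
qed

lemma pointwise_bound:
  fixes \<epsilon> m t x1 x2 z1 z2 :: real
  assumes e: "0 < \<epsilon>" and m: "0 < m" and t: "0 < t"
  defines "r \<equiv> sqrt (x1\<^sup>2 + x2\<^sup>2 + z1\<^sup>2 + z2\<^sup>2)"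
  defines "R \<equiv> max r \<epsilon>"
  defines "M \<equiv> max 1 (R\<^sup>2)"
  defines "a1 \<equiv> norm (FTy t x1)" and "a2 \<equiv> norm (FTy t x2)"
  defines "b1 \<equiv> norm (FTk \<epsilon> t z1)" and "b2 \<equiv> norm (FTk \<epsilon> t z2)"
  shows "t * exp (- t * m\<^sup>2) * (a1 * a2 * (b1 * b2)) \<le>
     indicator {0..r\<^sup>2} t * (40 * pi\<^sup>2 / r * t powr (-1/2)) + indicator {r\<^sup>2..\<epsilon>\<^sup>2} t * (4 * pi / \<epsilon>\<^sup>2)
     + indicator {R\<^sup>2..M} t * (pi / t) + indicator {M..} t * (pi / m\<^sup>2 * t powr (-2))"
proof -
  have r0: "0 \<le> r" by (simp add: r_def)
  have nn: "0 \<le> a1" "0 \<le> a2" "0 \<le> b1" "0 \<le> b2" by (simp_all add: a1_def a2_def b1_def b2_def)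
  have ya: "a1 \<le> sqrt (pi / t)" "a2 \<le> sqrt (pi / t)" using t by (simp_all add: a1_def a2_def FTy_le)
  have kb: "b1 \<le> 2 / sqrt t" "b2 \<le> 2 / sqrt t" using e t by (simp_all add: b1_def b2_def FTk_le3)
  have kb1: "b1 \<le> 2 / \<epsilon>" "b2 \<le> 2 / \<epsilon>" using e t by (simp_all add: b1_def b2_def FTk_le1)
  have st: "sqrt (pi / t) * sqrt (pi / t) = pi / t" using t by simp
  have sqt: "sqrt t * sqrt t = t" using t by simp
  have E: "0 < exp (- t * m\<^sup>2)" "exp (- t * m\<^sup>2) \<le> 1" using t by auto
  define P where "P = a1 * a2 * (b1 * b2)"
  have P0: "0 \<le> P" using nn by (simp add: P_def)
  define T1 where "T1 = indicator {0..r\<^sup>2} t * (40 * pi\<^sup>2 / r * t powr (-1/2))"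
  define T2 where "T2 = indicator {r\<^sup>2..\<epsilon>\<^sup>2} t * (4 * pi / \<epsilon>\<^sup>2)"
  define T3 where "T3 = indicator {R\<^sup>2..M} t * (pi / t)"
  define T4 where "T4 = indicator {M..} t * (pi / m\<^sup>2 * t powr (-2))"
  have T0: "0 \<le> T1" "0 \<le> T2" "0 \<le> T3" "0 \<le> T4" using t r0 by (simp_all add: T1_def T2_def T3_def T4_def)
  have "exp (- t * m\<^sup>2) * P \<le> 1 * P" using E P0 by (intro mult_right_mono) auto
  then have tP: "t * exp (- t * m\<^sup>2) * P \<le> t * P" using t by (simp add: mult.assoc mult_left_mono)
  have main: "t * exp (- t * m\<^sup>2) * P \<le> T1 + T2 + T3 + T4"
  proof (cases "t \<le> r\<^sup>2")
    case True
    then have rpos: "0 < r" using t r0 by (cases "r = 0") auto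
    have "t powr (-1/2) = t powr (-(1/2))" by simp
    also have "\<dots> = inverse (t powr (1/2))" by (rule powr_minus)
    also have "\<dots> = 1 / sqrt t" using t by (simp only: powr_half_sqrt[of t] less_imp_le inverse_eq_divide)
    finally have tpow0: "t powr (-1/2) = 1 / sqrt t" .
    then have tpow: "t powr (-(1/2)) = 1 / sqrt t" by simp
    have T1v: "T1 = 40 * pi\<^sup>2 / (r * sqrt t)" using True t by (simp add: T1_def tpow indicator_def)
    have "t * P \<le> 40 * pi\<^sup>2 / (r * sqrt t)"
    proof -
      have "pi * 1 \<le> pi * pi" using pi_gt3 by (intro mult_left_mono) auto
      then have "sqrt pi \<le> sqrt (pi\<^sup>2)" by (intro real_sqrt_le_mono) (simp add: power2_eq_square)
      then have pi1: "sqrt pi \<le> pi" by simp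
      consider "r/2 \<le> \<bar>x1\<bar>" | "r/2 \<le> \<bar>x2\<bar>" | "r/2 \<le> \<bar>z1\<bar>" | "r/2 \<le> \<bar>z2\<bar>"
        using big_coord[OF meta_eq_to_obj_eq[OF r_def]] by blast
      then show ?thesis
      proof cases
        case 1
        then have x0: "x1 \<noteq> 0" using rpos by auto
        have "a1 \<le> 5 * pi / \<bar>x1\<bar>" unfolding a1_def by (rule FTy_decay[OF t x0])
        also have "\<dots> \<le> 5 * pi / (r/2)" using 1 rpos by (intro divide_left_mono) auto
        finally have "P \<le> 5 * pi / (r/2) * sqrt (pi / t) * (2 / sqrt t * (2 / sqrt t))"
          unfolding P_def by (intro prod4_mono nn ya kb)
        also have "t * \<dots> = 40 * pi * sqrt pi / (r * sqrt t)"
          using t rpos by (simp add: real_sqrt_divide field_simps sqt)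
        also have "\<dots> \<le> 40 * pi\<^sup>2 / (r * sqrt t)"
          using pi1 rpos t by (intro divide_right_mono) (auto simp: power2_eq_square)
        finally show ?thesis using t by (simp add: mult_left_mono)
      next
        case 2
        then have x0: "x2 \<noteq> 0" using rpos by auto
        have "a2 \<le> 5 * pi / \<bar>x2\<bar>" unfolding a2_def by (rule FTy_decay[OF t x0])
        also have "\<dots> \<le> 5 * pi / (r/2)" using 2 rpos by (intro divide_left_mono) auto
        finally have "P \<le> sqrt (pi / t) * (5 * pi / (r/2)) * (2 / sqrt t * (2 / sqrt t))"
          unfolding P_def by (intro prod4_mono nn ya kb)
        also have "t * \<dots> = 40 * pi * sqrt pi / (r * sqrt t)"
          using t rpos by (simp add: real_sqrt_divide field_simps sqt)
        also have "\<dots> \<le> 40 * pi\<^sup>2 / (r * sqrt t)"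
          using pi1 rpos t by (intro divide_right_mono) (auto simp: power2_eq_square)
        finally show ?thesis using t by (simp add: mult_left_mono)
      next
        case 3
        then have z0: "z1 \<noteq> 0" using rpos by auto
        have "b1 \<le> 4 * pi / \<bar>z1\<bar>" unfolding b1_def by (rule FTk_decay[OF e t z0])
        also have "\<dots> \<le> 4 * pi / (r/2)" using 3 rpos by (intro divide_left_mono) auto
        finally have "P \<le> sqrt (pi / t) * sqrt (pi / t) * (4 * pi / (r/2) * (2 / sqrt t))"
          unfolding P_def by (intro prod4_mono nn ya kb)
        also have "t * \<dots> = 16 * pi\<^sup>2 / (r * sqrt t)"
          using t rpos by (simp add: st field_simps power2_eq_square)
        also have "\<dots> \<le> 40 * pi\<^sup>2 / (r * sqrt t)"
          using rpos t by (intro divide_right_mono) auto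
        finally show ?thesis using t by (simp add: mult_left_mono)
      next
        case 4
        then have z0: "z2 \<noteq> 0" using rpos by auto
        have "b2 \<le> 4 * pi / \<bar>z2\<bar>" unfolding b2_def by (rule FTk_decay[OF e t z0])
        also have "\<dots> \<le> 4 * pi / (r/2)" using 4 rpos by (intro divide_left_mono) auto
        finally have "P \<le> sqrt (pi / t) * sqrt (pi / t) * (2 / sqrt t * (4 * pi / (r/2)))"
          unfolding P_def by (intro prod4_mono nn ya kb)
        also have "t * \<dots> = 16 * pi\<^sup>2 / (r * sqrt t)"
          using t rpos by (simp add: st field_simps power2_eq_square)
        also have "\<dots> \<le> 40 * pi\<^sup>2 / (r * sqrt t)"
          using rpos t by (intro divide_right_mono) auto
        finally show ?thesis using t by (simp add: mult_left_mono)
      qed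
    qed
    then show ?thesis using tP T0 T1v by linarith
  next
    case False
    note nr = False
    show ?thesis
    proof (cases "t \<le> \<epsilon>\<^sup>2")
      case True
      have "P \<le> sqrt (pi / t) * sqrt (pi / t) * (2 / \<epsilon> * (2 / \<epsilon>))"
        unfolding P_def by (intro prod4_mono nn ya kb1)
      also have "t * \<dots> = 4 * pi / \<epsilon>\<^sup>2" using t e by (simp add: st field_simps power2_eq_square)
      finally have "t * P \<le> 4 * pi / \<epsilon>\<^sup>2" using t by (simp add: mult_left_mono)
      moreover have "T2 = 4 * pi / \<epsilon>\<^sup>2" using True nr by (simp add: T2_def indicator_def)
      ultimately show ?thesis using tP T0 by linarith
    next
      case False
      have R2: "R\<^sup>2 \<le> t" using nr False r0 e by (simp add: R_def max_def power2_eq_square) 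
      have kb2: "b1 \<le> 1 / sqrt t" "b2 \<le> 1 / sqrt t" using e False by (simp_all add: b1_def b2_def FTk_le2)
      have "P \<le> sqrt (pi / t) * sqrt (pi / t) * (1 / sqrt t * (1 / sqrt t))"
        unfolding P_def by (intro prod4_mono nn ya kb2)
      also have "\<dots> = pi / t / t" using t by (simp add: st field_simps sqt)
      finally have P1: "P \<le> pi / t / t" .
      have tEP: "t * exp (- t * m\<^sup>2) * P \<le> exp (- t * m\<^sup>2) * (pi / t)"
      proof -
        have "t * exp (- t * m\<^sup>2) * P \<le> t * exp (- t * m\<^sup>2) * (pi / t / t)"
          using t E P1 by (intro mult_left_mono) auto
        also have "\<dots> = exp (- t * m\<^sup>2) * (pi / t)" using t by simp
        finally show ?thesis .
      qed
      show ?thesis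
      proof (cases "t \<le> M")
        case True
        have "T3 = pi / t" using True R2 by (simp add: T3_def indicator_def)
        moreover have "exp (- t * m\<^sup>2) * (pi / t) \<le> 1 * (pi / t)" using E t by (intro mult_right_mono) auto
        ultimately show ?thesis using tEP T0 by linarith
      next
        case False
        have M1: "1 \<le> M" by (simp add: M_def)
        have "T4 = pi / m\<^sup>2 * (1 / t\<^sup>2)" using False t by (simp add: T4_def indicator_def powr_minus powr_numeral divide_inverse)
        moreover have "exp (- t * m\<^sup>2) * (pi / t) \<le> pi / m\<^sup>2 * (1 / t\<^sup>2)"
        proof -
          have "(t * m\<^sup>2) * exp (- (t * m\<^sup>2)) \<le> 1" using t by (intro s_exp_le1) simp
          then have "exp (- t * m\<^sup>2) \<le> 1 / (t * m\<^sup>2)" using t m by (simp add: field_simps)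
          then have "exp (- t * m\<^sup>2) * (pi / t) \<le> 1 / (t * m\<^sup>2) * (pi / t)" using t by (intro mult_right_mono) auto
          also have "\<dots> = pi / m\<^sup>2 * (1 / t\<^sup>2)" by (simp add: power2_eq_square field_simps)
          finally show ?thesis .
        qed
        ultimately show ?thesis using tEP T0 by linarith
      qed
    qed
  qed
  then show ?thesis by (simp add: P_def T1_def T2_def T3_def T4_def)
qed

lemma bnd_int:
  fixes \<epsilon> m r :: real
  assumes e: "0 < \<epsilon>" and m: "0 < m" and r0: "0 \<le> r"
  defines "R \<equiv> max r \<epsilon>"
  defines "M \<equiv> max 1 (R\<^sup>2)"
  shows "(\<integral>\<^sup>+t. ennreal (indicator {0..r\<^sup>2} t * (40 * pi\<^sup>2 / r * t powr (-1/2)) + indicator {r\<^sup>2..\<epsilon>\<^sup>2} t * (4 * pi / \<epsilon>\<^sup>2)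
     + indicator {R\<^sup>2..M} t * (pi / t) + indicator {M..} t * (pi / m\<^sup>2 * t powr (-2))) \<partial>lborel)
    \<le> ennreal (80 * pi\<^sup>2 + 4 * pi + pi * (ln M - ln (R\<^sup>2)) + pi / m\<^sup>2)"
proof -
  have R: "0 < R" using e by (simp add: R_def)
  have RM: "R\<^sup>2 \<le> M" "1 \<le> M" by (auto simp: M_def)
  have R2: "0 < R\<^sup>2" using R by simp
  have tpos: "R\<^sup>2 \<le> t \<Longrightarrow> 0 < t" for t using R2 by linarith
  define f1 where "f1 = (\<lambda>t::real. indicator {0..r\<^sup>2} t * (40 * pi\<^sup>2 / r * t powr (-1/2)))"
  define f2 where "f2 = (\<lambda>t::real. indicator {r\<^sup>2..\<epsilon>\<^sup>2} t * (4 * pi / \<epsilon>\<^sup>2))"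
  define f3 where "f3 = (\<lambda>t::real. indicator {R\<^sup>2..M} t * (pi / t))"
  define f4 where "f4 = (\<lambda>t::real. indicator {M..} t * (pi / m\<^sup>2 * t powr (-2)))"
  have f0: "0 \<le> f1 t" "0 \<le> f2 t" "0 \<le> f3 t" "0 \<le> f4 t" for t
    using tpos RM r0 by (auto simp: f1_def f2_def f3_def f4_def indicator_def intro!: divide_nonneg_pos)
  have [measurable]: "f1 \<in> borel_measurable borel" "f2 \<in> borel_measurable borel" "f3 \<in> borel_measurable borel" "f4 \<in> borel_measurable borel"
    unfolding f1_def f2_def f3_def f4_def by measurable
  have "(\<integral>\<^sup>+t. ennreal (f1 t + f2 t + f3 t + f4 t) \<partial>lborel) =
     (\<integral>\<^sup>+t. ennreal (f1 t) + ennreal (f2 t) + ennreal (f3 t) + ennreal (f4 t) \<partial>lborel)"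
    using f0 by (intro nn_integral_cong) (simp add: ennreal_plus add_nonneg_nonneg)
  also have "\<dots> = (\<integral>\<^sup>+t. ennreal (f1 t) \<partial>lborel) + (\<integral>\<^sup>+t. ennreal (f2 t) \<partial>lborel) + (\<integral>\<^sup>+t. ennreal (f3 t) \<partial>lborel) + (\<integral>\<^sup>+t. ennreal (f4 t) \<partial>lborel)"
    by (simp add: nn_integral_add)
  also have "\<dots> \<le> ennreal (80 * pi\<^sup>2) + ennreal (4 * pi) + ennreal (pi * (ln M - ln (R\<^sup>2))) + ennreal (pi / m\<^sup>2)"
  proof (intro add_mono)
    show "(\<integral>\<^sup>+t. ennreal (f1 t) \<partial>lborel) \<le> ennreal (80 * pi\<^sup>2)"
    proof (cases "r = 0")
      case True then show ?thesis by (simp add: f1_def)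
    next
      case False
      then have rp: "0 < r" using r0 by simp
      have "((\<lambda>t. 40 * pi\<^sup>2 / r * t powr (-1/2)) has_integral (40 * pi\<^sup>2 / r * ((r\<^sup>2) powr (-1/2 + 1) / (-1/2 + 1)))) {0..r\<^sup>2}"
        by (intro has_integral_mult_right has_integral_powr_from_0) auto
      then have "(\<integral>\<^sup>+t. ennreal (f1 t) \<partial>lborel) = ennreal (40 * pi\<^sup>2 / r * ((r\<^sup>2) powr (-1/2 + 1) / (-1/2 + 1)))"
        unfolding f1_def by (intro nn_integral_has_integral_lebesgue) (use rp in \<open>auto intro!: divide_nonneg_pos\<close>)
      also have "(r\<^sup>2) powr (-1/2 + 1) = r" using rp by (simp add: powr_half_sqrt)
      also have "40 * pi\<^sup>2 / r * (r / (-1/2 + 1)) = 80 * pi\<^sup>2" using rp by simp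
      finally show ?thesis by simp
    qed
    show "(\<integral>\<^sup>+t. ennreal (f2 t) \<partial>lborel) \<le> ennreal (4 * pi)"
    proof -
      have "(\<integral>\<^sup>+t. ennreal (f2 t) \<partial>lborel) = (\<integral>\<^sup>+t. ennreal (4 * pi / \<epsilon>\<^sup>2) * indicator {r\<^sup>2..\<epsilon>\<^sup>2} t \<partial>lborel)"
        by (intro nn_integral_cong) (simp add: f2_def indicator_def)
      also have "\<dots> = ennreal (4 * pi / \<epsilon>\<^sup>2) * emeasure lborel {r\<^sup>2..\<epsilon>\<^sup>2}" by (rule nn_integral_cmult_indicator) simp
      also have "\<dots> \<le> ennreal (4 * pi / \<epsilon>\<^sup>2) * emeasure lborel {0..\<epsilon>\<^sup>2}"
        by (intro mult_left_mono emeasure_mono) auto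
      also have "\<dots> = ennreal (4 * pi)" using e by (simp add: ennreal_mult[symmetric])
      finally show ?thesis .
    qed
    show "(\<integral>\<^sup>+t. ennreal (f3 t) \<partial>lborel) \<le> ennreal (pi * (ln M - ln (R\<^sup>2)))"
    proof -
      have "((\<lambda>t. pi / t) has_integral (pi * ln M - pi * ln (R\<^sup>2))) {R\<^sup>2..M}"
      proof (rule fundamental_theorem_of_calculus)
        show "R\<^sup>2 \<le> M" by (rule RM)
        show "((\<lambda>t. pi * ln t) has_vector_derivative pi / t) (at t within {R\<^sup>2..M})" if "t \<in> {R\<^sup>2..M}" for t
        proof -
          have "0 < t" using that R by (smt (verit) atLeastAtMost_iff zero_less_power)
          then show ?thesis
            by (auto intro!: derivative_eq_intros simp: has_real_derivative_iff_has_vector_derivative[symmetric] field_simps)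
        qed
      qed
      then have "(\<integral>\<^sup>+t. ennreal (f3 t) \<partial>lborel) = ennreal (pi * ln M - pi * ln (R\<^sup>2))"
        unfolding f3_def by (intro nn_integral_has_integral_lebesgue) (use tpos in \<open>auto intro!: divide_nonneg_pos\<close>)
      then show ?thesis by (simp add: right_diff_distrib)
    qed
    show "(\<integral>\<^sup>+t. ennreal (f4 t) \<partial>lborel) \<le> ennreal (pi / m\<^sup>2)"
    proof -
      have "((\<lambda>t. pi / m\<^sup>2 * t powr (-2)) has_integral (pi / m\<^sup>2 * (- (M powr (-2 + 1)) / (-2 + 1)))) {M..}"
        using RM by (intro has_integral_mult_right has_integral_powr_to_inf) auto
      then have "(\<integral>\<^sup>+t. ennreal (f4 t) \<partial>lborel) = ennreal (pi / m\<^sup>2 * (- (M powr (-2 + 1)) / (-2 + 1)))"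
        unfolding f4_def by (intro nn_integral_has_integral_lebesgue) auto
      also have "pi / m\<^sup>2 * (- (M powr (-2 + 1)) / (-2 + 1)) = pi / m\<^sup>2 * (1 / M)"
        using RM by (simp add: powr_minus_divide)
      finally have eqB: "(\<integral>\<^sup>+t. ennreal (f4 t) \<partial>lborel) = ennreal (pi / m\<^sup>2 * (1 / M))" .
      have "pi / m\<^sup>2 * (1 / M) \<le> pi / m\<^sup>2 * 1" using RM m by (intro mult_left_mono) auto
      then show ?thesis unfolding eqB by (intro ennreal_leI) simp
    qed
  qed
  also have "\<dots> = ennreal (80 * pi\<^sup>2 + 4 * pi + pi * (ln M - ln (R\<^sup>2)) + pi / m\<^sup>2)"
  proof -
    have "ln (R\<^sup>2) \<le> ln M" using R RM by simp
    then show ?thesis by (simp add: ennreal_plus[symmetric] del: ennreal_plus)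
  qed
  finally show ?thesis by (simp add: f1_def f2_def f3_def f4_def)
qed

lemma log_plus_eq: fixes R :: real assumes R: "0 < R"
  shows "ln (max 1 (R\<^sup>2)) - ln (R\<^sup>2) = 2 * log_plus (1 / R)"
proof (cases "R \<ge> 1")
  case True
  then have "1 \<le> R\<^sup>2" by (simp add: one_le_power)
  then have "max 1 (R\<^sup>2) = R\<^sup>2" by simp
  moreover have "ln (1 / R) \<le> 0" using True R by (simp add: ln_div)
  ultimately show ?thesis by (simp add: log_plus_def)
next
  case False
  then have "R\<^sup>2 < 1" using R by (simp add: power_less_one_iff abs_square_less_1)
  then have "max 1 (R\<^sup>2) = 1" by simp
  moreover have "ln (1 / R) \<ge> 0" using False R by (simp add: ln_div)
  moreover have "ln (R\<^sup>2) = 2 * ln R" using R by (simp add: ln_realpow)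
  ultimately show ?thesis using R by (simp add: log_plus_def ln_div)
qed

theorem mainTheorem15:
  fixes m C :: real
  assumes "m > 0" and "C > 2 / (4 * pi)\<^sup>2"
  shows "\<exists>D. \<forall>\<epsilon>\<in>{0<..1}. \<forall>x z :: real \<times> real.
           norm (Gbar m \<epsilon> x z)
             \<le> C * log_plus (1 / max (sqrt ((norm x)\<^sup>2 + (norm z)\<^sup>2)) \<epsilon>) + D"
proof -
  have m: "0 < m" by (rule assms(1))
  define D where "D = (80 * pi\<^sup>2 + 4 * pi + pi / m\<^sup>2) / (2 * pi) ^ 4"
  show ?thesis
  proof (intro exI[of _ D] ballI allI)
    fix \<epsilon> :: real and x z :: "real \<times> real"
    assume "\<epsilon> \<in> {0<..1}"
    then have e: "0 < \<epsilon>" by simp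
    obtain x1 x2 where x: "x = (x1, x2)" by (cases x) auto
    obtain z1 z2 where z: "z = (z1, z2)" by (cases z) auto
    define r where "r = sqrt (x1\<^sup>2 + x2\<^sup>2 + z1\<^sup>2 + z2\<^sup>2)"
    have r0: "0 \<le> r" by (simp add: r_def)
    have rr: "sqrt ((norm x)\<^sup>2 + (norm z)\<^sup>2) = r" by (simp add: x z norm_Pair r_def add.assoc)
    define R where "R = max r \<epsilon>"
    have R: "0 < R" using e by (simp add: R_def)
    define M where "M = max 1 (R\<^sup>2)"
    define S where "S = 80 * pi\<^sup>2 + 4 * pi + pi * (ln M - ln (R\<^sup>2)) + pi / m\<^sup>2"
    have lp: "ln M - ln (R\<^sup>2) = 2 * log_plus (1 / R)" unfolding M_def by (rule log_plus_eq[OF R])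
    have lp0: "0 \<le> log_plus (1 / R)" by (simp add: log_plus_def)
    have S0: "0 \<le> S" using lp lp0 by (simp add: S_def)
    have "ennreal (norm (integral\<^sup>L lborel (Gbar_integrand m \<epsilon> x z))) \<le>
      (\<integral>\<^sup>+t. ennreal (indicator {0<..} t * t * exp (- t * m\<^sup>2) * (norm (FTy t (fst x)) * norm (FTy t (snd x)) * (norm (FTk \<epsilon> t (fst z)) * norm (FTk \<epsilon> t (snd z))))) \<partial>lborel)"
      by (rule main_L1[OF e m])
    also have "\<dots> \<le> (\<integral>\<^sup>+t. ennreal (indicator {0..r\<^sup>2} t * (40 * pi\<^sup>2 / r * t powr (-1/2)) + indicator {r\<^sup>2..\<epsilon>\<^sup>2} t * (4 * pi / \<epsilon>\<^sup>2)
       + indicator {R\<^sup>2..M} t * (pi / t) + indicator {M..} t * (pi / m\<^sup>2 * t powr (-2))) \<partial>lborel)"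
    proof (intro nn_integral_mono ennreal_leI)
      fix t :: real
      show "indicator {0<..} t * t * exp (- t * m\<^sup>2) * (norm (FTy t (fst x)) * norm (FTy t (snd x)) * (norm (FTk \<epsilon> t (fst z)) * norm (FTk \<epsilon> t (snd z))))
         \<le> indicator {0..r\<^sup>2} t * (40 * pi\<^sup>2 / r * t powr (-1/2)) + indicator {r\<^sup>2..\<epsilon>\<^sup>2} t * (4 * pi / \<epsilon>\<^sup>2)
       + indicator {R\<^sup>2..M} t * (pi / t) + indicator {M..} t * (pi / m\<^sup>2 * t powr (-2))"
      proof (cases "0 < t")
        case True
        then show ?thesis using pointwise_bound[OF e m True, of x1 x2 z1 z2]
          by (simp add: x z r_def[symmetric] R_def[symmetric] M_def[symmetric])
      next
        case False
        have R2: "0 < R\<^sup>2" using R by simp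
        have M2: "0 < M" by (simp add: M_def)
        have h1: "0 \<le> indicator {0..r\<^sup>2} t * (40 * pi\<^sup>2 / r * t powr (-1/2))" using r0 by simp
        have h2: "0 \<le> indicator {r\<^sup>2..\<epsilon>\<^sup>2} t * (4 * pi / \<epsilon>\<^sup>2)" by simp
        have "\<not> R\<^sup>2 \<le> t" using False R2 by linarith
        then have h3: "indicator {R\<^sup>2..M} t * (pi / t) = 0" by (simp add: indicator_def)
        have "\<not> M \<le> t" using False M2 by linarith
        then have h4: "indicator {M..} t * (pi / m\<^sup>2 * t powr (-2)) = 0" by (simp add: indicator_def)
        have h0: "indicator {0<..} t * t * exp (- t * m\<^sup>2) * (norm (FTy t (fst x)) * norm (FTy t (snd x)) * (norm (FTk \<epsilon> t (fst z)) * norm (FTk \<epsilon> t (snd z)))) = 0"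
          using False by simp
        show ?thesis using h0 h1 h2 h3 h4 by linarith
      qed
    qed
    also have "\<dots> \<le> ennreal S" unfolding S_def R_def M_def by (rule bnd_int[OF e m r0])
    finally have N: "norm (integral\<^sup>L lborel (Gbar_integrand m \<epsilon> x z)) \<le> S" using S0 by (simp add: ennreal_le_iff)
    have "norm (Gbar m \<epsilon> x z) = 1 / (2 * pi) ^ 4 * norm (integral\<^sup>L lborel (Gbar_integrand m \<epsilon> x z))"
      unfolding Gbar_def norm_mult norm_of_real by simp
    also have "\<dots> \<le> 1 / (2 * pi) ^ 4 * S" using N by (intro mult_left_mono) auto
    also have "\<dots> = 2 * pi / (2 * pi) ^ 4 * log_plus (1 / R) + D"
      by (simp add: S_def lp D_def field_simps)
    also have "\<dots> \<le> C * log_plus (1 / R) + D"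
    proof -
      have "2 * pi / (2 * pi) ^ 4 = 1 / (8 * pi ^ 3)" by (simp add: power_mult_distrib power_numeral numeral_eq_Suc field_simps)
      also have "\<dots> \<le> 1 / (8 * pi\<^sup>2)"
      proof -
        have "pi\<^sup>2 * 1 \<le> pi\<^sup>2 * pi" using pi_gt3 by (intro mult_left_mono) auto
        then have "8 * pi\<^sup>2 \<le> 8 * pi ^ 3" by (simp add: power2_eq_square power3_eq_cube)
        then show ?thesis using pi_gt_zero by (intro divide_left_mono) auto
      qed
      also have "\<dots> = 2 / (4 * pi)\<^sup>2" by (simp add: power_mult_distrib)
      also have "\<dots> \<le> C" using assms(2) by simp
      finally have "2 * pi / (2 * pi) ^ 4 \<le> C" .
      then show ?thesis using lp0 by (intro add_right_mono mult_right_mono) auto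
    qed
    finally show "norm (Gbar m \<epsilon> x z) \<le> C * log_plus (1 / max (sqrt ((norm x)\<^sup>2 + (norm z)\<^sup>2)) \<epsilon>) + D"
      by (simp add: rr R_def)
  qed
qed

end
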